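(* Let $q=p^m$ with $p$ odd, $G=\mathrm{SL}_2(q)$, and let $V$ be a natural module for $G$ regarded over $\mathbb{F}_p$. Set $H=\mathrm{GL}(V)\cong\mathrm{GL}_{2m}(p)$ and identify $G$ with its image in $H$. Let $S\in\mathrm{Syl}_p(G)$. If $L\le H$ with $L\cong\mathrm{SL}_2(q)$ and $N_G(S)<L$, then $L=G$.
   Context: A natural module for $\mathrm{SL}_2(q)$ over $\mathbb{F}_p$ is the $2$-dimensional $\mathbb{F}_q$-space $\mathbb{F}_q^2$ with the natural matrix action of $\mathrm{SL}_2(q)$, regarded as a $2m$-dimensional $\mathbb{F}_p$-space. *)

theory Defs
  imports "HOL-Algebra.Group" "HOL-Computational_Algebra.Primes"
begin

text \<open>The finite field F_q is a finite field type 'a with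
  card 'a = q = p^m (so its characteristic is p and its prime field is the image of
  of_nat). The natural module V = F_q^2 is the type 'a \<times> 'a.\<close>

definition vadd :: "'a::field \<times> 'a \<Rightarrow> 'a \<times> 'a \<Rightarrow> 'a \<times> 'a" where
  "vadd u v = (fst u + fst v, snd u + snd v)"

definition smul :: "'a::field \<Rightarrow> 'a \<times> 'a \<Rightarrow> 'a \<times> 'a" where
  "smul c v = (c * fst v, c * snd v)"

text \<open>Linearity over the prime field F_p = {of_nat k}.\<close>
definition fp_linear :: "('a::field \<times> 'a \<Rightarrow> 'a \<times> 'a) \<Rightarrow> bool" where
  "fp_linear f \<longleftrightarrow> (\<forall>u v. f (vadd u v) = vadd (f u) (f v))
     \<and> (\<forall>(k::nat) v. f (smul (of_nat k) v) = smul (of_nat k) (f v))"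

definition GLV :: "('a::field \<times> 'a \<Rightarrow> 'a \<times> 'a) monoid" where
  "GLV = \<lparr>carrier = {f. bij f \<and> fp_linear f}, monoid.mult = (\<circ>), one = id\<rparr>"

text \<open>SL_2(q) as an abstract group of 2x2 matrices (a,b,c,d) = [[a,b],[c,d]].\<close>
definition SL2 :: "('a::field \<times> 'a \<times> 'a \<times> 'a) monoid" where
  "SL2 = \<lparr>carrier = {(a,b,c,d). a * d - b * c = 1},
          monoid.mult = (\<lambda>(a,b,c,d) (e,f,g,h).
             (a*e + b*g, a*f + b*h, c*e + d*g, c*f + d*h)),
          one = (1,0,0,1)\<rparr>"

definition nat_map :: "'a::field \<times> 'a \<times> 'a \<times> 'a \<Rightarrow> ('a \<times> 'a \<Rightarrow> 'a \<times> 'a)" where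
  "nat_map A = (case A of (a,b,c,d) \<Rightarrow> (\<lambda>(x,y). (a*x + b*y, c*x + d*y)))"

definition natG :: "('a::field \<times> 'a \<Rightarrow> 'a \<times> 'a) set" where
  "natG = nat_map ` carrier SL2"

definition is_sylow :: "nat \<Rightarrow> ('a::field \<times> 'a \<Rightarrow> 'a \<times> 'a) set \<Rightarrow> ('a \<times> 'a \<Rightarrow> 'a \<times> 'a) set \<Rightarrow> bool" where
  "is_sylow p K S \<longleftrightarrow> S \<subseteq> K \<and> subgroup S GLV \<and> (\<exists>a. card S = p ^ a)
     \<and> \<not> p dvd (card K div card S)"

definition normalizer_in :: "('a::field \<times> 'a \<Rightarrow> 'a \<times> 'a) set \<Rightarrow> ('a \<times> 'a \<Rightarrow> 'a \<times> 'a) set \<Rightarrow> ('a \<times> 'a \<Rightarrow> 'a \<times> 'a) set" where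
  "normalizer_in K S = {g \<in> K. (\<lambda>s. g \<otimes>\<^bsub>GLV\<^esub> s \<otimes>\<^bsub>GLV\<^esub> inv\<^bsub>GLV\<^esub> g) ` S = S}"

end

theory Submission
  imports Defs "HOL-Number_Theory.Residues" "HOL-Algebra.Group_Action"
begin

definition xm :: "'a::field \<Rightarrow> 'a \<times> 'a \<times> 'a \<times> 'a" where "xm b = (1,b,0,1)"
definition ym :: "'a::field \<Rightarrow> 'a \<times> 'a \<times> 'a \<times> 'a" where "ym c = (1,0,c,1)"
definition dm :: "'a::field \<Rightarrow> 'a \<times> 'a \<times> 'a \<times> 'a" where "dm a = (a,0,0,inverse a)"
definition wm :: "'a::field \<Rightarrow> 'a \<times> 'a \<times> 'a \<times> 'a" where "wm b = (0,b,-inverse b,0)"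
definition minv :: "'a::field \<times> 'a \<times> 'a \<times> 'a \<Rightarrow> 'a \<times> 'a \<times> 'a \<times> 'a" where
  "minv A = (case A of (a,b,c,d) \<Rightarrow> (d,-b,-c,a))"

abbreviation SLm (infixl "\<cdot>" 70) where "A \<cdot> B \<equiv> A \<otimes>\<^bsub>(SL2::('a::field \<times> 'a \<times> 'a \<times> 'a) monoid)\<^esub> B"

lemma SL2_mult[simp]: "((a::'a::field),b,c,d) \<cdot> (e,f,g,h) = (a*e + b*g, a*f + b*h, c*e + d*g, c*f + d*h)"
  by (simp add: SL2_def)

lemma SL2_one[simp]: "\<one>\<^bsub>(SL2::('a::field \<times> 'a \<times> 'a \<times> 'a) monoid)\<^esub> = (1,0,0,1)"
  by (simp add: SL2_def)

lemma SL2_carrier[simp]: "((a::'a::field),b,c,d) \<in> carrier SL2 \<longleftrightarrow> a*d - b*c = 1"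
  by (simp add: SL2_def)

lemma SL2_mult_closed: "(A::'a::field \<times> 'a \<times> 'a \<times> 'a) \<in> carrier SL2 \<Longrightarrow> B \<in> carrier SL2 \<Longrightarrow> A \<cdot> B \<in> carrier SL2"
  by (cases A; cases B) (auto simp: algebra_simps, algebra)

lemma SL2_assoc: "((A::'a::field \<times> 'a \<times> 'a \<times> 'a) \<cdot> B) \<cdot> C = A \<cdot> (B \<cdot> C)"
  by (cases A; cases B; cases C) (simp add: algebra_simps)

lemma minv_carrier: "(A::'a::field \<times> 'a \<times> 'a \<times> 'a) \<in> carrier SL2 \<Longrightarrow> minv A \<in> carrier SL2"
  by (cases A) (auto simp: minv_def algebra_simps)

lemma minv_l: "(A::'a::field \<times> 'a \<times> 'a \<times> 'a) \<in> carrier SL2 \<Longrightarrow> minv A \<cdot> A = (1,0,0,1)"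
  by (cases A) (auto simp: minv_def algebra_simps)

lemma minv_r: "(A::'a::field \<times> 'a \<times> 'a \<times> 'a) \<in> carrier SL2 \<Longrightarrow> A \<cdot> minv A = (1,0,0,1)"
  by (cases A) (auto simp: minv_def algebra_simps)

lemma group_SL2: "group (SL2::('a::field \<times> 'a \<times> 'a \<times> 'a) monoid)"
proof (rule groupI)
  fix x y :: "'a \<times> 'a \<times> 'a \<times> 'a"
  assume "x \<in> carrier SL2" "y \<in> carrier SL2"
  then show "x \<cdot> y \<in> carrier SL2" by (rule SL2_mult_closed)
next
  show "\<one>\<^bsub>(SL2::('a::field \<times> 'a \<times> 'a \<times> 'a) monoid)\<^esub> \<in> carrier SL2" by simp
next
  fix x y z :: "'a \<times> 'a \<times> 'a \<times> 'a"
  show "x \<cdot> y \<cdot> z = x \<cdot> (y \<cdot> z)" by (rule SL2_assoc)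
next
  fix x :: "'a \<times> 'a \<times> 'a \<times> 'a"
  show "\<one>\<^bsub>SL2\<^esub> \<cdot> x = x" by (cases x) simp
next
  fix x :: "'a \<times> 'a \<times> 'a \<times> 'a"
  assume "x \<in> carrier SL2"
  then show "\<exists>y\<in>carrier SL2. y \<cdot> x = \<one>\<^bsub>SL2\<^esub>"
    using minv_carrier minv_l by fastforce
qed

lemma inv_SL2: "(A::'a::field \<times> 'a \<times> 'a \<times> 'a) \<in> carrier SL2 \<Longrightarrow> inv\<^bsub>SL2\<^esub> A = minv A"
  using group.inv_equality[OF group_SL2, of "minv A" A] minv_l[of A] minv_carrier[of A] by simp

lemma nat_map_simp[simp]: "nat_map ((a::'a::field),b,c,d) (x,y) = (a*x + b*y, c*x + d*y)"
  by (simp add: nat_map_def)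

lemma nat_map_mult: "nat_map ((A::'a::field \<times> 'a \<times> 'a \<times> 'a) \<cdot> B) = nat_map A \<circ> nat_map B"
  by (cases A; cases B) (auto simp: fun_eq_iff algebra_simps)

lemma nat_map_inj: "nat_map (A::'a::field \<times> 'a \<times> 'a \<times> 'a) = nat_map B \<Longrightarrow> A = B"
proof -
  assume h: "nat_map A = nat_map B"
  obtain a b c d where A: "A = (a,b,c,d)" by (cases A) auto
  obtain e f g k where B: "B = (e,f,g,k)" by (cases B) auto
  have "nat_map A (1,0) = nat_map B (1,0)" "nat_map A (0,1) = nat_map B (0,1)" using h by auto
  then show ?thesis by (simp add: A B)
qed

lemma nat_map_one: "nat_map ((1,0,0,1)::'a::field \<times> 'a \<times> 'a \<times> 'a) = id"
  by (auto simp: fun_eq_iff)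

lemma fp_linear_nat_map: "fp_linear (nat_map (A::'a::field \<times> 'a \<times> 'a \<times> 'a))"
  by (cases A) (auto simp: fp_linear_def vadd_def smul_def algebra_simps)

lemma nat_map_GLV: "(A::'a::field \<times> 'a \<times> 'a \<times> 'a) \<in> carrier SL2 \<Longrightarrow> nat_map A \<in> carrier GLV"
proof -
  assume A: "A \<in> carrier SL2"
  have "bij (nat_map A)"
  proof (rule bij_betw_byWitness[where f'="nat_map (minv A)"])
    show "\<forall>a\<in>UNIV. nat_map (minv A) (nat_map A a) = a"
      using nat_map_mult[of "minv A" A] minv_l[OF A] nat_map_one by (metis comp_apply id_apply)
    show "\<forall>a\<in>UNIV. nat_map A (nat_map (minv A) a) = a"
      using nat_map_mult[of A "minv A"] minv_r[OF A] nat_map_one by (metis comp_apply id_apply)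
  qed auto
  then show ?thesis by (simp add: GLV_def fp_linear_nat_map)
qed

lemma fp_linear_comp: "fp_linear f \<Longrightarrow> fp_linear g \<Longrightarrow> fp_linear (f \<circ> g)"
  unfolding fp_linear_def comp_def by metis

lemma fp_linear_inv: "fp_linear f \<Longrightarrow> bij f \<Longrightarrow> fp_linear (Hilbert_Choice.inv f)"
proof -
  assume l: "fp_linear f" and b: "bij f"
  have fi: "f (Hilbert_Choice.inv f x) = x" for x using b by (simp add: bij_is_surj surj_f_inv_f)
  have if_: "Hilbert_Choice.inv f (f x) = x" for x using b by (simp add: bij_is_inj)
  show ?thesis unfolding fp_linear_def
  proof (intro conjI allI)
    fix u v show "Hilbert_Choice.inv f (vadd u v) = vadd (Hilbert_Choice.inv f u) (Hilbert_Choice.inv f v)"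
      using l fi if_ unfolding fp_linear_def by metis
  next
    fix k :: nat and v show "Hilbert_Choice.inv f (smul (of_nat k) v) = smul (of_nat k) (Hilbert_Choice.inv f v)"
      using l fi if_ unfolding fp_linear_def by metis
  qed
qed

lemma group_GLV: "group (GLV :: ('a::field \<times> 'a \<Rightarrow> 'a \<times> 'a) monoid)"
proof (rule groupI)
  fix x y :: "'a \<times> 'a \<Rightarrow> 'a \<times> 'a"
  assume "x \<in> carrier GLV" "y \<in> carrier GLV"
  then show "x \<otimes>\<^bsub>GLV\<^esub> y \<in> carrier GLV"
    by (auto simp: GLV_def bij_comp fp_linear_comp)
next
  show "\<one>\<^bsub>(GLV :: ('a::field \<times> 'a \<Rightarrow> 'a \<times> 'a) monoid)\<^esub> \<in> carrier GLV"
    by (simp add: GLV_def fp_linear_def)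
next
  fix x y z :: "'a \<times> 'a \<Rightarrow> 'a \<times> 'a"
  show "x \<otimes>\<^bsub>GLV\<^esub> y \<otimes>\<^bsub>GLV\<^esub> z = x \<otimes>\<^bsub>GLV\<^esub> (y \<otimes>\<^bsub>GLV\<^esub> z)"
    by (simp add: GLV_def comp_assoc)
next
  fix x :: "'a \<times> 'a \<Rightarrow> 'a \<times> 'a"
  show "\<one>\<^bsub>GLV\<^esub> \<otimes>\<^bsub>GLV\<^esub> x = x" by (simp add: GLV_def)
next
  fix x :: "'a \<times> 'a \<Rightarrow> 'a \<times> 'a"
  assume "x \<in> carrier GLV"
  then show "\<exists>y\<in>carrier GLV. y \<otimes>\<^bsub>GLV\<^esub> x = \<one>\<^bsub>GLV\<^esub>"
    by (intro bexI[of _ "Hilbert_Choice.inv x"]) (auto simp: GLV_def fp_linear_inv bij_imp_bij_inv bij_is_inj)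
qed

lemma GLV_mult[simp]: "f \<otimes>\<^bsub>GLV\<^esub> g = f \<circ> g" by (simp add: GLV_def)
lemma GLV_one[simp]: "\<one>\<^bsub>GLV\<^esub> = id" by (simp add: GLV_def)

lemma inv_GLV_nat: "(A::'a::field \<times> 'a \<times> 'a \<times> 'a) \<in> carrier SL2 \<Longrightarrow> inv\<^bsub>GLV\<^esub> (nat_map A) = nat_map (minv A)"
proof -
  assume A: "A \<in> carrier SL2"
  have "nat_map (minv A) \<otimes>\<^bsub>GLV\<^esub> nat_map A = \<one>\<^bsub>GLV\<^esub>"
    using nat_map_mult[of "minv A" A] minv_l[OF A] nat_map_one by (metis GLV_mult GLV_one)
  then show ?thesis
    using group.inv_equality[OF group_GLV] nat_map_GLV[OF A] nat_map_GLV[OF minv_carrier[OF A]] by blast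
qed


lemma card_SL2: "card (carrier (SL2::('a::{finite,field} \<times> 'a \<times> 'a \<times> 'a) monoid)) = card (UNIV::'a set) * (card (UNIV::'a set) * card (UNIV::'a set) - 1)"
proof -
  let ?q = "card (UNIV::'a set)"
  define P where "P = (\<lambda>(a,b). (a,b,0,inverse a)::'a \<times> 'a \<times> 'a \<times> 'a) ` ((UNIV-{0}) \<times> UNIV)"
  define Q where "Q = (\<lambda>(a,c,d). (a,(a*d-1)/c,c,d)::'a \<times> 'a \<times> 'a \<times> 'a) ` (UNIV \<times> (UNIV-{0}) \<times> UNIV)"
  have eq: "carrier SL2 = P \<union> Q"
  proof (rule Set.set_eqI)
    fix A :: "'a \<times> 'a \<times> 'a \<times> 'a"
    obtain a b c d where A: "A = (a,b,c,d)" by (cases A) auto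
    show "A \<in> carrier SL2 \<longleftrightarrow> A \<in> P \<union> Q"
    proof
      assume "A \<in> carrier SL2"
      then have det: "a*d - b*c = 1" by (simp add: A)
      show "A \<in> P \<union> Q"
      proof (cases "c = 0")
        case True
        then have ad: "a * d = 1" using det by simp
        have "a \<noteq> 0" using ad by auto
        have "d = inverse a" using ad by (metis inverse_unique)
        with \<open>a \<noteq> 0\<close> show ?thesis using True unfolding P_def A by (auto intro!: image_eqI[of _ _ "(a,b)"])
      next
        case False
        then have "b = (a*d-1)/c" using det by (auto simp: field_simps)
        then show ?thesis using False unfolding Q_def A by (auto intro!: image_eqI[of _ _ "(a,c,d)"])
      qed
    next
      assume "A \<in> P \<union> Q"
      then show "A \<in> carrier SL2"
      proof
        assume "A \<in> P" then obtain a b where "a \<noteq> 0" "A = (a,b,0,inverse a)" unfolding P_def by auto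
        then show ?thesis by simp
      next
        assume "A \<in> Q" then obtain a c d where "c \<noteq> 0" "A = (a,(a*d-1)/c,c,d)" unfolding Q_def by auto
        then show ?thesis by (simp add: divide_simps)
      qed
    qed
  qed
  have disj: "P \<inter> Q = {}" unfolding P_def Q_def by auto
  have cP: "card P = (?q - 1) * ?q"
    unfolding P_def
    by (subst card_image) (auto simp: inj_on_def card_cartesian_product card_Diff_singleton)
  have cQ: "card Q = ?q * ((?q - 1) * ?q)"
    unfolding Q_def
    by (subst card_image) (auto simp: inj_on_def card_cartesian_product card_Diff_singleton)
  have "card (carrier (SL2::('a \<times> 'a \<times> 'a \<times> 'a) monoid)) = (?q - 1) * ?q + ?q * ((?q - 1) * ?q)"
    using eq disj cP cQ by (simp add: card_Un_disjoint)
  also have "\<dots> = ?q * (?q * ?q - 1)"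
  proof -
    have "?q \<ge> 1" using finite_UNIV_card_ge_0[where 'a='a] by simp
    then obtain r where "?q = r + 1" by (metis le_add_diff_inverse2)
    then show ?thesis by (simp add: algebra_simps)
  qed
  finally show ?thesis .
qed

lemma SL2_gen:
  assumes "(A::'a::field \<times> 'a \<times> 'a \<times> 'a) \<in> carrier SL2"
  shows "(\<exists>s c t. A = xm s \<cdot> ym c \<cdot> xm t) \<or> (\<exists>s c t. A = ym (-1) \<cdot> (xm s \<cdot> ym c \<cdot> xm t))"
proof -
  have key: "\<exists>s c t. B = xm s \<cdot> ym c \<cdot> xm t" if "B \<in> carrier SL2" "fst (snd (snd B)) \<noteq> 0" for B :: "'a \<times> 'a \<times> 'a \<times> 'a"
  proof -
    obtain a b c d where B: "B = (a,b,c,d)" by (cases B) auto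
    have c: "c \<noteq> 0" and det: "a*d - b*c = 1" using that by (auto simp: B)
    have "B = xm ((a-1)/c) \<cdot> ym c \<cdot> xm ((d-1)/c)"
      using c det by (simp add: B xm_def ym_def field_simps)
    then show ?thesis by blast
  qed
  obtain a b c d where A: "A = (a,b,c,d)" by (cases A) auto
  show ?thesis
  proof (cases "c = 0")
    case False
    then show ?thesis using key[OF assms] by (simp add: A)
  next
    case True
    then have a: "a \<noteq> 0" using assms by (auto simp: A)
    have "ym 1 \<cdot> A \<in> carrier SL2" using assms SL2_mult_closed[of "ym 1" A] by (simp add: ym_def)
    moreover have "fst (snd (snd (ym 1 \<cdot> A))) \<noteq> 0" using a True by (simp add: A ym_def)
    ultimately obtain s c' t where e: "ym 1 \<cdot> A = xm s \<cdot> ym c' \<cdot> xm t" using key by blast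
    have "A = ym (-1) \<cdot> (ym 1 \<cdot> A)" by (simp add: A ym_def)
    then show ?thesis using e by metis
  qed
qed

lemma char_facts:
  assumes "prime p" "card (UNIV :: 'a::{finite,field} set) = p ^ m" "m \<ge> 1"
  shows "\<And>k. (of_nat k :: 'a) = 0 \<longleftrightarrow> p dvd k"
proof -
  have "prime CHAR('a)"
    by (simp add: finite_imp_CHAR_pos prime_CHAR_semidom)
  moreover have "CHAR('a) dvd p ^ m" using CHAR_dvd_CARD[where 'a='a] assms(2) by simp
  ultimately have "CHAR('a) dvd p" using prime_dvd_power by blast
  then have "CHAR('a) = p" using assms(1) \<open>prime CHAR('a)\<close>
    using primes_dvd_imp_eq by blast
  then show "\<And>k. (of_nat k :: 'a) = 0 \<longleftrightarrow> p dvd k"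
    using of_nat_eq_0_iff_char_dvd by metis
qed


lemma nat_map_minv_l:
  assumes "(A::'a::field \<times> 'a \<times> 'a \<times> 'a) \<in> carrier SL2"
  shows "nat_map (minv A) (nat_map A v) = v"
proof -
  have "nat_map (minv A \<cdot> A) v = v" using minv_l[OF assms] by (cases v) simp
  then show ?thesis by (simp only: nat_map_mult comp_apply)
qed

lemma nat_map_minv_r:
  assumes "(A::'a::field \<times> 'a \<times> 'a \<times> 'a) \<in> carrier SL2"
  shows "nat_map A (nat_map (minv A) v) = v"
proof -
  have "nat_map (A \<cdot> minv A) v = v" using minv_r[OF assms] by (cases v) simp
  then show ?thesis by (simp only: nat_map_mult comp_apply)
qed

lemma nat_map_zero: "nat_map (A::'a::field \<times> 'a \<times> 'a \<times> 'a) (0,0) = (0,0)"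
  by (cases A) simp

lemma nat_map_nonzero:
  assumes "(A::'a::field \<times> 'a \<times> 'a \<times> 'a) \<in> carrier SL2" "v \<noteq> (0,0)"
  shows "nat_map A v \<noteq> (0,0)"
  by (metis assms nat_map_minv_l nat_map_zero)

lemma nat_map_bij_X:
  assumes "(A::'a::field \<times> 'a \<times> 'a \<times> 'a) \<in> carrier SL2"
  shows "bij_betw (nat_map A) (UNIV - {(0,0)}) (UNIV - {(0,0)})"
  apply (rule bij_betw_byWitness[where f'="nat_map (minv A)"])
  apply (simp add: nat_map_minv_l[OF assms])
  apply (simp add: nat_map_minv_r[OF assms])
  using nat_map_nonzero[OF assms] apply (simp add: image_subset_iff)
  using nat_map_nonzero[OF minv_carrier[OF assms]] apply (simp add: image_subset_iff)
  done
lemma pgroup_fixed_vector: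
  fixes P :: "('a::{finite,field} \<times> 'a \<times> 'a \<times> 'a) set"
  assumes sub: "subgroup P SL2" and cP: "card P = p ^ a" and a: "a \<ge> 1" and p: "prime p"
    and nd: "\<not> p dvd (card (UNIV :: ('a \<times> 'a) set) - 1)"
  shows "\<exists>v. v \<noteq> (0,0) \<and> (\<forall>A\<in>P. nat_map A v = v)"
proof (rule ccontr)
  assume nofix: "\<not> ?thesis"
  define X where "X = (UNIV :: ('a \<times> 'a) set) - {(0,0)}"
  define G where "G = (SL2 :: ('a \<times> 'a \<times> 'a \<times> 'a) monoid)\<lparr>carrier := P\<rparr>"
  define \<phi> where "\<phi> = (\<lambda>A. \<lambda>v\<in>X. nat_map A v)"
  have PS: "P \<subseteq> carrier SL2" using sub subgroup.subset by blast
  have gG: "group G" unfolding G_def using subgroup.subgroup_is_group[OF sub group_SL2] .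
  have phiB: "\<phi> A \<in> Bij X" if "A \<in> P" for A
  proof -
    have "bij_betw (nat_map A) X X" unfolding X_def by (rule nat_map_bij_X) (use PS that in auto)
    then have "bij_betw (\<phi> A) X X" unfolding \<phi>_def by (rule bij_betw_cong[THEN iffD1, rotated]) auto
    then show ?thesis unfolding Bij_def \<phi>_def by auto
  qed
  have hom: "\<phi> \<in> hom G (BijGroup X)"
  proof (rule homI)
    fix A assume "A \<in> carrier G" then show "\<phi> A \<in> carrier (BijGroup X)"
      using phiB by (simp add: G_def BijGroup_def)
  next
    fix A B assume A: "A \<in> carrier G" and B: "B \<in> carrier G"
    then have AP: "A \<in> P" and BP: "B \<in> P" by (auto simp: G_def)
    have "\<phi> (A \<otimes>\<^bsub>G\<^esub> B) = compose X (\<phi> A) (\<phi> B)"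
    proof (rule ext)
      fix v show "\<phi> (A \<otimes>\<^bsub>G\<^esub> B) v = compose X (\<phi> A) (\<phi> B) v"
      proof (cases "v \<in> X")
        case True
        have "nat_map B v \<in> X" using True nat_map_nonzero[of B v] PS BP unfolding X_def by auto
        then show ?thesis using True by (simp add: \<phi>_def compose_def G_def nat_map_mult)
      next
        case False then show ?thesis by (simp add: \<phi>_def compose_def)
      qed
    qed
    then show "\<phi> (A \<otimes>\<^bsub>G\<^esub> B) = \<phi> A \<otimes>\<^bsub>BijGroup X\<^esub> \<phi> B"
      using phiB AP BP by (simp add: BijGroup_def)
  qed
  interpret ga: group_action G X \<phi>
    unfolding group_action_def group_hom_def group_hom_axioms_def
    using gG group_BijGroup hom by blast
  have finX: "finite X" by simp
  have orbdvd: "p dvd card Ob" if Ob: "Ob \<in> orbits G X \<phi>" for Ob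
  proof -
    obtain x where x: "x \<in> X" and Obe: "Ob = orbit G \<phi> x" using Ob unfolding orbits_def by blast
    have "card Ob * card (stabilizer G \<phi> x) = p ^ a"
      using ga.orbit_stabilizer_theorem[OF x] Obe cP by (simp add: order_def G_def)
    then have "card Ob dvd p ^ a" by (metis dvd_triv_left)
    then obtain i where i: "i \<le> a" "card Ob = p ^ i" using divides_primepow_nat[OF p] by blast
    show ?thesis
    proof (cases "i = 0")
      case False then show ?thesis using i by simp
    next
      case True
      then have c1: "card Ob = 1" using i by simp
      have one: "(1,0,0,1) \<in> P" using subgroup.one_closed[OF sub] by simp
      have "\<phi> (1,0,0,1) x = x" using x by (cases x) (simp add: \<phi>_def)
      then have "x \<in> Ob" unfolding Obe orbit_def G_def using one by force
      then have Obx: "Ob = {x}" using c1 by (metis card_1_singletonE singletonD)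
      have "\<forall>A\<in>P. nat_map A x = x"
      proof
        fix A assume "A \<in> P"
        then have "A \<in> carrier G" by (simp add: G_def)
        then have "\<phi> A x \<in> Ob" unfolding Obe orbit_def by blast
        then show "nat_map A x = x" using Obx x by (simp add: \<phi>_def)
      qed
      then show ?thesis using nofix x X_def by blast
    qed
  qed
  have "(\<Sum>Ob\<in>orbits G X \<phi>. \<Sum>x\<in>Ob. (1::nat)) = (\<Sum>x\<in>X. 1)"
    using ga.disjoint_sum[OF finX] .
  then have "(\<Sum>Ob\<in>orbits G X \<phi>. card Ob) = card X" by simp
  moreover have "p dvd (\<Sum>Ob\<in>orbits G X \<phi>. card Ob)" using orbdvd by (simp add: dvd_sum)
  ultimately have "p dvd card X" by simp
  moreover have "card X = card (UNIV :: ('a \<times> 'a) set) - 1" unfolding X_def by (simp add: card_Diff_singleton)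
  ultimately show False using nd by simp
qed


lemma mult_conj_cancel:
  assumes "(h::'a::field \<times> 'a \<times> 'a \<times> 'a) \<in> carrier SL2"
  shows "minv h \<cdot> (h \<cdot> X \<cdot> minv h) \<cdot> h = X"
proof -
  have "minv h \<cdot> (h \<cdot> X \<cdot> minv h) \<cdot> h = (minv h \<cdot> h) \<cdot> X \<cdot> (minv h \<cdot> h)"
    by (simp only: SL2_assoc)
  also have "\<dots> = X" using minv_l[OF assms] by (cases X) simp
  finally show ?thesis .
qed

lemma sylow_SL2:
  fixes P :: "('a::{finite,field} \<times> 'a \<times> 'a \<times> 'a) set"
  assumes sub: "subgroup P SL2" and cP: "card P = p ^ a" and a: "a \<ge> 1" and p: "prime p"
    and q: "card (UNIV :: 'a set) = p ^ m" and m: "m \<ge> 1"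
  shows "\<exists>h\<in>carrier SL2. P \<subseteq> (\<lambda>b. h \<cdot> xm b \<cdot> minv h) ` UNIV"
proof -
  let ?q = "card (UNIV :: 'a set)"
  have nd: "\<not> p dvd (card (UNIV :: ('a \<times> 'a) set) - 1)"
  proof
    assume h: "p dvd card (UNIV :: ('a \<times> 'a) set) - 1"
    have cq: "card (UNIV :: ('a \<times> 'a) set) = ?q * ?q" by (metis UNIV_Times_UNIV card_cartesian_product)
    have "p dvd ?q" using q m by (simp add: dvd_power)
    then have d1: "p dvd ?q * ?q" by simp
    have "?q * ?q \<ge> 1" using finite_UNIV_card_ge_0[where 'a='a] by simp
    have h': "p dvd ?q * ?q - 1" using h cq by simp
    have "p dvd ?q * ?q - (?q * ?q - 1)" by (rule dvd_diff_nat[OF d1 h'])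
    moreover have "?q * ?q - (?q * ?q - 1) = 1" using \<open>?q * ?q \<ge> 1\<close> by simp
    ultimately have "p dvd 1" by simp
    then show False using p by simp
  qed
  obtain v where v: "v \<noteq> (0,0)" "\<forall>A\<in>P. nat_map A v = v"
    using pgroup_fixed_vector[OF sub cP a p nd] by blast
  obtain v1 v2 where vv: "v = (v1, v2)" by (cases v) auto
  obtain h where h: "h \<in> carrier SL2" "nat_map h (1,0) = v"
  proof (cases "v1 = 0")
    case True
    then have "v2 \<noteq> 0" using v vv by auto
    then show ?thesis using that[of "(0, - inverse v2, v2, 0)"] True vv by simp
  next
    case False
    then show ?thesis using that[of "(v1, 0, v2, inverse v1)"] vv by simp
  qed
  have "P \<subseteq> (\<lambda>b. h \<cdot> xm b \<cdot> minv h) ` UNIV"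
  proof
    fix A assume AP: "A \<in> P"
    then have A: "A \<in> carrier SL2" using sub subgroup.subset by blast
    define K where "K = minv h \<cdot> A \<cdot> h"
    have K: "K \<in> carrier SL2" unfolding K_def using A h minv_carrier SL2_mult_closed by blast
    have "nat_map K (1,0) = (1,0)"
    proof -
      have "nat_map K (1,0) = nat_map (minv h) (nat_map A (nat_map h (1,0)))"
        by (simp add: K_def nat_map_mult)
      also have "\<dots> = nat_map (minv h) v" using h v AP by simp
      also have "\<dots> = nat_map (minv h) (nat_map h (1,0))" using h by simp
      also have "\<dots> = (1,0)" using nat_map_mult[of "minv h" h] minv_l[OF h(1)] nat_map_one
        by (metis comp_apply id_apply)
      finally show ?thesis .
    qed
    then obtain b where Kb: "K = xm b"
    proof -
      obtain k1 k2 k3 k4 where Ke: "K = (k1,k2,k3,k4)" by (cases K) auto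
      have "k1 = 1" "k3 = 0" using \<open>nat_map K (1,0) = (1,0)\<close> by (simp_all add: Ke)
      moreover have "k1*k4 - k2*k3 = 1" using K Ke by simp
      ultimately have "K = xm k2" by (simp add: Ke xm_def)
      then show ?thesis using that by blast
    qed
    have "A = h \<cdot> K \<cdot> minv h"
    proof -
      have "h \<cdot> K \<cdot> minv h = (h \<cdot> minv h) \<cdot> A \<cdot> (h \<cdot> minv h)"
        unfolding K_def by (simp only: SL2_assoc)
      also have "\<dots> = A" using minv_r[OF h(1)] by (cases A) simp
      finally show ?thesis by simp
    qed
    then show "A \<in> (\<lambda>b. h \<cdot> xm b \<cdot> minv h) ` UNIV" using Kb by blast
  qed
  then show ?thesis using h by blast
qed

lemma card_conjU:
  assumes "(h::'a::{finite,field} \<times> 'a \<times> 'a \<times> 'a) \<in> carrier SL2"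
  shows "card ((\<lambda>b. h \<cdot> xm b \<cdot> minv h) ` UNIV) = card (UNIV :: 'a set)"
proof (rule card_image)
  show "inj (\<lambda>b. h \<cdot> xm b \<cdot> minv h)"
  proof
    fix b b' assume "h \<cdot> xm b \<cdot> minv h = h \<cdot> xm b' \<cdot> minv h"
    then have "xm b = xm b'" using mult_conj_cancel[OF assms] by metis
    then show "b = b'" by (simp add: xm_def)
  qed
qed


type_synonym 'a mat = "'a \<times> 'a \<times> 'a \<times> 'a"

lemma minv_minv[simp]: "minv (minv (A::'a::field \<times> 'a \<times> 'a \<times> 'a)) = A"
  by (cases A) (simp add: minv_def)

lemma mult_one_r[simp]: "(A::'a::field \<times> 'a \<times> 'a \<times> 'a) \<cdot> (1,0,0,1) = A"
  by (cases A) simp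

lemma mult_one_l[simp]: "(1,0,0,1) \<cdot> (A::'a::field \<times> 'a \<times> 'a \<times> 'a) = A"
  by (cases A) simp

lemma minv_cancel_l:
  assumes "(k::'a::field \<times> 'a \<times> 'a \<times> 'a) \<in> carrier SL2"
  shows "minv k \<cdot> (k \<cdot> X) = X"
proof -
  have "minv k \<cdot> (k \<cdot> X) = (minv k \<cdot> k) \<cdot> X" by (simp only: SL2_assoc)
  then show ?thesis using minv_l[OF assms] by simp
qed

lemma minv_cancel_r:
  assumes "(k::'a::field \<times> 'a \<times> 'a \<times> 'a) \<in> carrier SL2"
  shows "k \<cdot> (minv k \<cdot> X) = X"
proof -
  have "k \<cdot> (minv k \<cdot> X) = (k \<cdot> minv k) \<cdot> X" by (simp only: SL2_assoc)
  then show ?thesis using minv_r[OF assms] by simp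
qed

lemma conj_mult:
  assumes "(k::'a::field \<times> 'a \<times> 'a \<times> 'a) \<in> carrier SL2"
  shows "(k \<cdot> A \<cdot> minv k) \<cdot> (k \<cdot> B \<cdot> minv k) = k \<cdot> (A \<cdot> B) \<cdot> minv k"
proof -
  have "(k \<cdot> A \<cdot> minv k) \<cdot> (k \<cdot> B \<cdot> minv k) = k \<cdot> (A \<cdot> (minv k \<cdot> (k \<cdot> (B \<cdot> minv k))))"
    by (simp only: SL2_assoc)
  also have "\<dots> = k \<cdot> (A \<cdot> (B \<cdot> minv k))" using minv_cancel_l[OF assms] by simp
  also have "\<dots> = k \<cdot> (A \<cdot> B) \<cdot> minv k" by (simp only: SL2_assoc)
  finally show ?thesis .
qed

lemma conj_closed:
  assumes "(k::'a::field \<times> 'a \<times> 'a \<times> 'a) \<in> carrier SL2" "A \<in> carrier SL2"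
  shows "k \<cdot> A \<cdot> minv k \<in> carrier SL2"
  using assms SL2_mult_closed minv_carrier by blast

definition isrep :: "('a::field \<times> 'a \<times> 'a \<times> 'a \<Rightarrow> ('a \<times> 'a \<Rightarrow> 'a \<times> 'a)) \<Rightarrow> bool" where
  "isrep \<psi> \<longleftrightarrow> (\<forall>A\<in>carrier SL2. \<psi> A \<in> carrier GLV) \<and>
     (\<forall>A\<in>carrier SL2. \<forall>B\<in>carrier SL2. \<psi> (A \<cdot> B) = \<psi> A \<circ> \<psi> B) \<and> inj_on \<psi> (carrier SL2)"

lemma isrepD:
  assumes "isrep \<psi>"
  shows "\<And>A. A \<in> carrier SL2 \<Longrightarrow> \<psi> A \<in> carrier GLV"
    and "\<And>A B. A \<in> carrier SL2 \<Longrightarrow> B \<in> carrier SL2 \<Longrightarrow> \<psi> (A \<cdot> B) = \<psi> A \<circ> \<psi> B"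
    and "inj_on \<psi> (carrier SL2)"
  using assms unfolding isrep_def by auto

lemma isrep_bij: "isrep \<psi> \<Longrightarrow> A \<in> carrier SL2 \<Longrightarrow> bij (\<psi> A)"
proof -
  assume "isrep \<psi>" "A \<in> carrier SL2"
  then have "\<psi> A \<in> carrier GLV" by (rule isrepD(1))
  then show ?thesis by (simp add: GLV_def)
qed

lemma isrep_lin: "isrep \<psi> \<Longrightarrow> A \<in> carrier SL2 \<Longrightarrow> fp_linear (\<psi> A)"
proof -
  assume "isrep \<psi>" "A \<in> carrier SL2"
  then have "\<psi> A \<in> carrier GLV" by (rule isrepD(1))
  then show ?thesis by (simp add: GLV_def)
qed

lemma isrep_one:
  assumes "isrep \<psi>"
  shows "\<psi> (1,0,0,1) = id"
proof -
  have I: "(1,0,0,1) \<in> carrier (SL2::('a \<times> 'a \<times> 'a \<times> 'a) monoid)" by simp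
  have e: "\<psi> (1,0,0,1) \<circ> \<psi> (1,0,0,1) = \<psi> (1,0,0,1)"
    using isrepD(2)[OF assms I I] by simp
  have "inj (\<psi> (1,0,0,1))" using isrep_bij[OF assms I] bij_is_inj by blast
  show ?thesis
  proof (rule ext)
    fix v
    have "\<psi> (1,0,0,1) (\<psi> (1,0,0,1) v) = \<psi> (1,0,0,1) v" using e by (metis comp_apply)
    then show "\<psi> (1,0,0,1) v = id v" using \<open>inj (\<psi> (1,0,0,1))\<close> by (simp add: injD)
  qed
qed

lemma isrep_inv:
  assumes "isrep \<psi>" "A \<in> carrier SL2"
  shows "\<psi> A \<circ> \<psi> (minv A) = id" "\<psi> (minv A) \<circ> \<psi> A = id"
  using isrepD(2)[OF assms(1) assms(2) minv_carrier[OF assms(2)]]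
    isrepD(2)[OF assms(1) minv_carrier[OF assms(2)] assms(2)]
    minv_l[OF assms(2)] minv_r[OF assms(2)] isrep_one[OF assms(1)] by auto

lemma comp_inv_unique: "f \<circ> g = id \<Longrightarrow> g \<circ> h = id \<Longrightarrow> f = h"
  by (metis comp_assoc comp_id id_comp)

lemma isrep_conj:
  fixes \<psi> :: "'a::field \<times> 'a \<times> 'a \<times> 'a \<Rightarrow> ('a \<times> 'a \<Rightarrow> 'a \<times> 'a)"
  assumes "isrep \<psi>" "k \<in> carrier SL2"
  shows "isrep (\<lambda>A. \<psi> (k \<cdot> A \<cdot> minv k))"
    and "(\<lambda>A. \<psi> (k \<cdot> A \<cdot> minv k)) ` carrier SL2 = \<psi> ` carrier SL2"
proof -
  show "isrep (\<lambda>A. \<psi> (k \<cdot> A \<cdot> minv k))"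
    unfolding isrep_def
  proof (intro conjI ballI)
    fix A :: "'a mat" assume "A \<in> carrier SL2"
    then show "\<psi> (k \<cdot> A \<cdot> minv k) \<in> carrier GLV" by (rule isrepD(1)[OF assms(1) conj_closed[OF assms(2)]])
  next
    fix A B :: "'a mat" assume A: "A \<in> carrier SL2" and B: "B \<in> carrier SL2"
    have "\<psi> (k \<cdot> (A \<cdot> B) \<cdot> minv k) = \<psi> ((k \<cdot> A \<cdot> minv k) \<cdot> (k \<cdot> B \<cdot> minv k))"
      using conj_mult[OF assms(2)] by simp
    also have "\<dots> = \<psi> (k \<cdot> A \<cdot> minv k) \<circ> \<psi> (k \<cdot> B \<cdot> minv k)"
      by (rule isrepD(2)[OF assms(1) conj_closed[OF assms(2) A] conj_closed[OF assms(2) B]])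
    finally show "\<psi> (k \<cdot> (A \<cdot> B) \<cdot> minv k) = \<psi> (k \<cdot> A \<cdot> minv k) \<circ> \<psi> (k \<cdot> B \<cdot> minv k)" .
  next
    show "inj_on (\<lambda>A. \<psi> (k \<cdot> A \<cdot> minv k)) (carrier SL2)"
    proof (rule inj_onI)
      fix A B :: "'a mat" assume A: "A \<in> carrier SL2" and B: "B \<in> carrier SL2"
        and e: "\<psi> (k \<cdot> A \<cdot> minv k) = \<psi> (k \<cdot> B \<cdot> minv k)"
      have "k \<cdot> A \<cdot> minv k = k \<cdot> B \<cdot> minv k"
        by (rule inj_onD[OF isrepD(3)[OF assms(1)] e conj_closed[OF assms(2) A] conj_closed[OF assms(2) B]])
      then have "minv k \<cdot> (k \<cdot> A \<cdot> minv k) \<cdot> k = minv k \<cdot> (k \<cdot> B \<cdot> minv k) \<cdot> k" by (simp only:)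
      then show "A = B" by (simp only: mult_conj_cancel[OF assms(2)])
    qed
  qed
  show "(\<lambda>A. \<psi> (k \<cdot> A \<cdot> minv k)) ` carrier SL2 = \<psi> ` carrier SL2"
  proof (rule Set.set_eqI)
    fix f
    show "f \<in> (\<lambda>A. \<psi> (k \<cdot> A \<cdot> minv k)) ` carrier SL2 \<longleftrightarrow> f \<in> \<psi> ` carrier SL2"
    proof
      assume "f \<in> (\<lambda>A. \<psi> (k \<cdot> A \<cdot> minv k)) ` carrier SL2"
      then obtain A where A: "A \<in> carrier SL2" "f = \<psi> (k \<cdot> A \<cdot> minv k)" by blast
      show "f \<in> \<psi> ` carrier SL2" using A(2) by (rule image_eqI[OF _ conj_closed[OF assms(2) A(1)]])
    next
      assume "f \<in> \<psi> ` carrier SL2"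
      then obtain A where A: "A \<in> carrier SL2" "f = \<psi> A" by blast
      have "k \<cdot> (minv k \<cdot> A \<cdot> minv (minv k)) \<cdot> minv k = A"
        using mult_conj_cancel[OF minv_carrier[OF assms(2)], of A] by simp
      moreover have "minv k \<cdot> A \<cdot> minv (minv k) \<in> carrier SL2"
        using conj_closed[OF minv_carrier[OF assms(2)] A(1)] .
      ultimately show "f \<in> (\<lambda>A. \<psi> (k \<cdot> A \<cdot> minv k)) ` carrier SL2" using A(2)
        by (intro image_eqI[where x="minv k \<cdot> A \<cdot> minv (minv k)"]) simp_all
    qed
  qed
qed

lemma lemmaZ:
  fixes \<alpha> :: "'a::field \<Rightarrow> 'a" and a :: 'a
  assumes add: "\<And>x y. \<alpha> (x + y) = \<alpha> x + \<alpha> y"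
    and sc: "\<And>t x. t \<noteq> 0 \<Longrightarrow> \<alpha> (t * x) = inverse t * \<alpha> x"
    and a: "a \<noteq> 0" "a + 1 \<noteq> 0" "a * a + a + 1 \<noteq> 0"
  shows "\<alpha> x = 0"
proof -
  have z: "\<alpha> 0 = 0" using add[of 0 0] by (metis add_left_imp_eq add.right_neutral)
  have g: "\<alpha> t = inverse t * \<alpha> 1" if "t \<noteq> 0" for t using sc[OF that, of 1] by simp
  have c: "\<alpha> 1 = 0"
  proof (rule ccontr)
    assume c0: "\<alpha> 1 \<noteq> 0"
    have "\<alpha> (1 + a) = \<alpha> 1 + \<alpha> a" by (rule add)
    then have "inverse (1 + a) * \<alpha> 1 = \<alpha> 1 + inverse a * \<alpha> 1"
      using g[of "1 + a"] g[of a] a by (simp add: add.commute)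
    then have "inverse (1 + a) = 1 + inverse a" using c0
      by (metis distrib_right mult_cancel_right mult_1)
    then have "a = a * (1 + a) + (1 + a)" using a by (simp add: field_simps add.commute)
    then have "a * a + a + 1 = 0" by (simp add: algebra_simps)
    then show False using a by simp
  qed
  show ?thesis
  proof (cases "x = 0")
    case True then show ?thesis using z by simp
  next
    case False then show ?thesis using g c by simp
  qed
qed


lemma xm_carrier[simp]: "xm (b::'a::field) \<in> carrier SL2" by (simp add: xm_def)
lemma ym_carrier[simp]: "ym (b::'a::field) \<in> carrier SL2" by (simp add: ym_def)
lemma wm_carrier[simp]: "(b::'a::field) \<noteq> 0 \<Longrightarrow> wm b \<in> carrier SL2" by (simp add: wm_def)
lemma xm_mult: "xm (b::'a::field) \<cdot> xm c = xm (b + c)" by (simp add: xm_def)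
lemma xm_zero: "xm (0::'a::field) = (1,0,0,1)" by (simp add: xm_def)
lemma nat_map_xm: "nat_map (xm (b::'a::field)) (x,y) = (x + b*y, y)" by (simp add: xm_def)
lemma nat_map_ym: "nat_map (ym (c::'a::field)) (x,y) = (x, c*x + y)" by (simp add: ym_def)
lemma nat_map_dm: "nat_map (dm (t::'a::field)) (x,y) = (t*x, inverse t * y)" by (simp add: dm_def)
lemma nat_map_xm_comp: "nat_map (xm (b::'a::field)) \<circ> nat_map (xm c) = nat_map (xm (b + c))"
  by (simp add: nat_map_mult[symmetric] xm_mult)
lemma xm_inj: "nat_map (xm (b::'a::field)) = nat_map (xm c) \<Longrightarrow> b = c"
  by (drule nat_map_inj) (simp add: xm_def)

lemma nat_map_comp_minv:
  assumes "(B::'a::field mat) \<in> carrier SL2"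
  shows "nat_map B \<circ> nat_map (minv B) = id" "nat_map (minv B) \<circ> nat_map B = id"
  by (simp_all add: nat_map_mult[symmetric] minv_r[OF assms] minv_l[OF assms] nat_map_one)

declare SL2_carrier[simp del]

lemma isrep_prod:
  assumes "isrep \<psi>" "f \<in> \<psi> ` carrier SL2" "g \<in> \<psi> ` carrier SL2"
  shows "f \<circ> g \<in> \<psi> ` carrier SL2"
proof -
  obtain A where A: "A \<in> carrier SL2" "f = \<psi> A" using assms(2) by blast
  obtain B where B: "B \<in> carrier SL2" "g = \<psi> B" using assms(3) by blast
  have "f \<circ> g = \<psi> (A \<cdot> B)" using isrepD(2)[OF assms(1) A(1) B(1)] A B by simp
  then show ?thesis using SL2_mult_closed[OF A(1) B(1)] by blast
qed

lemma isrep_minv_nat: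
  assumes "isrep \<psi>" "A \<in> carrier SL2" "\<psi> A = nat_map B" "B \<in> carrier SL2"
  shows "\<psi> (minv A) = nat_map (minv B)"
proof (rule comp_inv_unique)
  show "\<psi> (minv A) \<circ> \<psi> A = id" using isrep_inv(2)[OF assms(1,2)] .
  show "\<psi> A \<circ> nat_map (minv B) = id"
    using assms(3) nat_map_comp_minv[OF assms(4)] by simp
qed

lemma E1:
  fixes \<psi> :: "'a::{finite,field} mat \<Rightarrow> ('a \<times> 'a \<Rightarrow> 'a \<times> 'a)"
  assumes rep: "isrep \<psi>" and xs: "\<forall>b. nat_map (xm b) \<in> \<psi> ` carrier SL2"
  shows "subgroup {A \<in> carrier SL2. \<psi> A \<in> range (\<lambda>b. nat_map (xm b))} SL2"
    and "card {A \<in> carrier SL2. \<psi> A \<in> range (\<lambda>b. nat_map (xm b))} = card (UNIV :: 'a set)"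
proof -
  define P where "P = {A \<in> carrier SL2. \<psi> A \<in> range (\<lambda>b. nat_map (xm b))}"
  show "subgroup {A \<in> carrier SL2. \<psi> A \<in> range (\<lambda>b. nat_map (xm b))} SL2"
    unfolding P_def[symmetric]
  proof (rule group.subgroupI[OF group_SL2])
    show "P \<subseteq> carrier SL2" unfolding P_def by blast
    have "\<psi> (1,0,0,1) = nat_map (xm 0)" by (simp only: isrep_one[OF rep] xm_zero nat_map_one)
    then have "(1,0,0,1) \<in> P" unfolding P_def by (simp add: SL2_carrier)
    then show "P \<noteq> {}" by blast
  next
    fix A assume A: "A \<in> P"
    then obtain b where Ac: "A \<in> carrier SL2" and b: "\<psi> A = nat_map (xm b)" unfolding P_def by blast
    have "\<psi> (minv A) = nat_map (minv (xm b))" by (rule isrep_minv_nat[OF rep Ac b xm_carrier])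
    also have "minv (xm b) = xm (- b)" by (simp add: xm_def minv_def)
    finally have "\<psi> (minv A) \<in> range (\<lambda>b. nat_map (xm b))" by blast
    then show "inv\<^bsub>SL2\<^esub> A \<in> P" unfolding P_def using inv_SL2[OF Ac] minv_carrier[OF Ac] by simp
  next
    fix A B assume A: "A \<in> P" and B: "B \<in> P"
    then obtain b c where Ac: "A \<in> carrier SL2" and b: "\<psi> A = nat_map (xm b)"
      and Bc: "B \<in> carrier SL2" and c: "\<psi> B = nat_map (xm c)" unfolding P_def by blast
    have "\<psi> (A \<cdot> B) = nat_map (xm (b + c))"
      using isrepD(2)[OF rep Ac Bc] b c nat_map_xm_comp by simp
    then show "A \<otimes>\<^bsub>SL2\<^esub> B \<in> P" unfolding P_def using SL2_mult_closed[OF Ac Bc] by blast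
  qed
  have eqr: "\<psi> ` P = range (\<lambda>b. nat_map (xm b))"
  proof (rule Set.set_eqI)
    fix f show "f \<in> \<psi> ` P \<longleftrightarrow> f \<in> range (\<lambda>b. nat_map (xm b))"
    proof
      assume "f \<in> \<psi> ` P" then show "f \<in> range (\<lambda>b. nat_map (xm b))" unfolding P_def by blast
    next
      assume "f \<in> range (\<lambda>b. nat_map (xm b))"
      then obtain b where fb: "f = nat_map (xm b)" by blast
      have "nat_map (xm b) \<in> \<psi> ` carrier SL2" using xs by blast
      then obtain A where "A \<in> carrier SL2" "\<psi> A = f" using fb by auto
      then show "f \<in> \<psi> ` P" unfolding P_def using fb by blast
    qed
  qed
  have ij: "inj_on \<psi> P" using isrepD(3)[OF rep] unfolding P_def by (rule inj_on_subset) blast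
  have "card P = card (\<psi> ` P)" using card_image[OF ij] by (rule sym)
  also have "\<dots> = card (range (\<lambda>b::'a. nat_map (xm b)))" by (simp only: eqr)
  also have "\<dots> = card (UNIV :: 'a set)" by (rule card_image) (auto intro: injI xm_inj)
  finally show "card {A \<in> carrier SL2. \<psi> A \<in> range (\<lambda>b. nat_map (xm b))} = card (UNIV :: 'a set)"
    unfolding P_def .
qed

lemma E2:
  fixes \<psi> :: "'a::{finite,field} mat \<Rightarrow> ('a \<times> 'a \<Rightarrow> 'a \<times> 'a)"
  assumes rep: "isrep \<psi>" and xs: "\<forall>b. nat_map (xm b) \<in> \<psi> ` carrier SL2"
    and p: "prime p" and q: "card (UNIV::'a set) = p ^ m" and m: "m \<ge> 1"
  shows "\<exists>\<psi>'. isrep \<psi>' \<and> \<psi>' ` carrier SL2 = \<psi> ` carrier SL2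
     \<and> (\<forall>b. \<psi>' (xm b) \<in> range (\<lambda>b::'a. nat_map (xm b))) \<and> (\<forall>c. \<exists>b. \<psi>' (xm b) = nat_map (xm c))"
proof -
  define P where "P = {A \<in> carrier SL2. \<psi> A \<in> range (\<lambda>b::'a. nat_map (xm b))}"
  have sub: "subgroup P SL2" using E1(1)[OF rep xs] unfolding P_def .
  have cP: "card P = p ^ m" using E1(2)[OF rep xs] q unfolding P_def by simp
  obtain h where h: "h \<in> carrier SL2" "P \<subseteq> (\<lambda>b. h \<cdot> xm b \<cdot> minv h) ` UNIV"
    using sylow_SL2[OF sub cP m p q m] by blast
  have Peq: "P = (\<lambda>b. h \<cdot> xm b \<cdot> minv h) ` UNIV"
  proof (rule card_subset_eq)
    show "finite ((\<lambda>b. h \<cdot> xm b \<cdot> minv h) ` UNIV)" by simp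
    show "P \<subseteq> (\<lambda>b. h \<cdot> xm b \<cdot> minv h) ` UNIV" by (rule h(2))
    show "card P = card ((\<lambda>b. h \<cdot> xm b \<cdot> minv h) ` UNIV)"
      using card_conjU[OF h(1)] cP q by simp
  qed
  define \<psi>' where "\<psi>' = (\<lambda>A. \<psi> (h \<cdot> A \<cdot> minv h))"
  have rep': "isrep \<psi>'" unfolding \<psi>'_def by (rule isrep_conj(1)[OF rep h(1)])
  have img: "\<psi>' ` carrier SL2 = \<psi> ` carrier SL2" unfolding \<psi>'_def by (rule isrep_conj(2)[OF rep h(1)])
  have U1: "\<forall>b. \<psi>' (xm b) \<in> range (\<lambda>b::'a. nat_map (xm b))"
  proof
    fix b :: 'a
    have "h \<cdot> xm b \<cdot> minv h \<in> P" using Peq by blast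
    then show "\<psi>' (xm b) \<in> range (\<lambda>b::'a. nat_map (xm b))" unfolding P_def \<psi>'_def by blast
  qed
  have U2: "\<forall>c. \<exists>b. \<psi>' (xm b) = nat_map (xm c)"
  proof
    fix c :: 'a
    have "nat_map (xm c) \<in> \<psi> ` carrier SL2" using xs by blast
    then obtain A where A: "A \<in> carrier SL2" "\<psi> A = nat_map (xm c)" by auto
    then have "A \<in> P" unfolding P_def by blast
    then obtain b where "A = h \<cdot> xm b \<cdot> minv h" using Peq by blast
    then show "\<exists>b. \<psi>' (xm b) = nat_map (xm c)" using A(2) unfolding \<psi>'_def by blast
  qed
  show ?thesis using rep' img U1 U2 by blast
qed

lemma E3:
  fixes \<psi> :: "'a::field mat \<Rightarrow> ('a \<times> 'a \<Rightarrow> 'a \<times> 'a)"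
  assumes rep: "isrep \<psi>" and U1: "\<forall>b. \<psi> (xm b) \<in> range (\<lambda>b::'a. nat_map (xm b))"
    and U2: "\<forall>c. \<exists>b. \<psi> (xm b) = nat_map (xm c)"
    and A: "A \<in> carrier SL2" and eq: "\<psi> A = nat_map (a, b, 0, inverse a)" and a: "a \<noteq> 0"
  shows "fst (snd (snd A)) = 0"
proof -
  define \<beta> where "\<beta> = (a, b, 0::'a, inverse a)"
  have \<beta>c: "\<beta> \<in> carrier SL2" using a by (simp add: SL2_carrier \<beta>_def)
  obtain b1 where b1: "\<psi> (xm 1) = nat_map (xm b1)" using U1 by blast
  have inv: "\<psi> (minv A) = nat_map (minv \<beta>)"
    by (rule isrep_minv_nat[OF rep A _ \<beta>c]) (simp add: eq \<beta>_def)
  have c1: "A \<cdot> xm 1 \<in> carrier SL2" using SL2_mult_closed[OF A xm_carrier] .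
  have "\<psi> (A \<cdot> xm 1 \<cdot> minv A) = \<psi> A \<circ> \<psi> (xm 1) \<circ> \<psi> (minv A)"
    using isrepD(2)[OF rep c1 minv_carrier[OF A]] isrepD(2)[OF rep A xm_carrier] by simp
  also have "\<dots> = nat_map (\<beta> \<cdot> xm b1 \<cdot> minv \<beta>)"
    using eq b1 inv by (simp add: nat_map_mult \<beta>_def)
  also have "\<beta> \<cdot> xm b1 \<cdot> minv \<beta> = xm (a*a*b1)"
    using a by (simp add: \<beta>_def xm_def minv_def field_simps)
  finally have e1: "\<psi> (A \<cdot> xm 1 \<cdot> minv A) = nat_map (xm (a*a*b1))" .
  obtain b2 where b2: "\<psi> (xm b2) = nat_map (xm (a*a*b1))" using U2 by blast
  have "A \<cdot> xm 1 \<cdot> minv A = xm b2"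
    by (rule inj_onD[OF isrepD(3)[OF rep]]) (use e1 b2 SL2_mult_closed[OF c1 minv_carrier[OF A]] in auto)
  then show ?thesis
  proof -
    assume h: "A \<cdot> xm 1 \<cdot> minv A = xm b2"
    obtain a' b' c' d' where Ae: "A = (a',b',c',d')" by (cases A) auto
    have "c' * d' + (c' + d') * (- c') = 0" using h by (simp add: Ae xm_def minv_def)
    then have "c' * c' = 0" by (simp add: algebra_simps)
    then show ?thesis by (simp add: Ae)
  qed
qed

lemma conj_back:
  assumes "(k::'a::field mat) \<in> carrier SL2"
  shows "k \<cdot> (minv k \<cdot> X \<cdot> k) \<cdot> minv k = X"
  using mult_conj_cancel[OF minv_carrier[OF assms], of X] by simp

lemma dm_carrier: "(a::'a::field) \<noteq> 0 \<Longrightarrow> dm a \<in> carrier SL2"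
  by (simp add: dm_def SL2_carrier)

lemma E4:
  fixes a0 :: "'a::field" and \<psi> :: "'a mat \<Rightarrow> ('a \<times> 'a \<Rightarrow> 'a \<times> 'a)"
  assumes rep: "isrep \<psi>" and U1: "\<forall>b. \<psi> (xm b) \<in> range (\<lambda>b::'a. nat_map (xm b))"
    and U2: "\<forall>c. \<exists>b. \<psi> (xm b) = nat_map (xm c)"
    and Bor: "\<forall>a b. a \<noteq> 0 \<longrightarrow> nat_map (a, b, 0, inverse a) \<in> \<psi> ` carrier SL2"
    and a0: "a0 \<noteq> 0" "a0 * a0 \<noteq> 1"
  shows "\<exists>\<psi>'. isrep \<psi>' \<and> \<psi>' ` carrier SL2 = \<psi> ` carrier SL2
     \<and> (\<forall>b. \<psi>' (xm b) \<in> range (\<lambda>b::'a. nat_map (xm b))) \<and> (\<forall>c. \<exists>b. \<psi>' (xm b) = nat_map (xm c))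
     \<and> (\<forall>t. t \<noteq> 0 \<longrightarrow> (\<exists>s. dm s \<in> carrier SL2 \<and> \<psi>' (dm s) = nat_map (dm t)))"
proof -
  have "nat_map (a0, 0, 0, inverse a0) \<in> \<psi> ` carrier SL2" using Bor a0 by blast
  then obtain e where ec: "e \<in> carrier SL2" and ee0: "\<psi> e = nat_map (a0, 0, 0, inverse a0)"
    by (metis imageE)
  have ee: "\<psi> e = nat_map (dm a0)" using ee0 by (simp add: dm_def)
  have c0: "fst (snd (snd e)) = 0" by (rule E3[OF rep U1 U2 ec ee0 a0(1)])
  obtain a \<beta> d where eq: "e = (a, \<beta>, 0, d)" using c0 by (cases e) auto
  have ad: "a * d = 1" using ec by (simp add: SL2_carrier eq)
  then have a: "a \<noteq> 0" by auto
  have d: "d = inverse a" using ad by (metis inverse_unique)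
  have aa: "a * a \<noteq> 1"
  proof
    assume h: "a * a = 1"
    then have dd: "d * d = 1" using d by (metis inverse_mult_distrib inverse_1)
    have "e \<cdot> e = xm (a*\<beta> + \<beta>*d)" using h dd by (simp add: eq xm_def)
    then have "\<psi> (e \<cdot> e) \<in> range (\<lambda>b::'a. nat_map (xm b))" using U1 by simp
    moreover have "\<psi> (e \<cdot> e) = nat_map (dm (a0 * a0))"
      using isrepD(2)[OF rep ec ec] ee by (simp add: nat_map_mult[symmetric] dm_def)
    ultimately obtain b3 where "nat_map (dm (a0 * a0)) = nat_map (xm b3)" by auto
    then have "dm (a0 * a0) = xm b3" by (rule nat_map_inj)
    then show False using a0 by (simp add: dm_def xm_def)
  qed
  have ai: "a - inverse a \<noteq> 0"
  proof
    assume "a - inverse a = 0"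
    then have "a = inverse a" by simp
    then have "a * a = a * inverse a" by simp
    then show False using aa a by simp
  qed
  define c where "c = - \<beta> / (a - inverse a)"
  have cc: "c * (a - inverse a) = - \<beta>" using ai by (simp add: c_def)
  define k where "k = xm c"
  have kc: "k \<in> carrier SL2" by (simp add: k_def)
  define \<psi>' where "\<psi>' = (\<lambda>A. \<psi> (k \<cdot> A \<cdot> minv k))"
  have rep': "isrep \<psi>'" unfolding \<psi>'_def by (rule isrep_conj(1)[OF rep kc])
  have img: "\<psi>' ` carrier SL2 = \<psi> ` carrier SL2" unfolding \<psi>'_def by (rule isrep_conj(2)[OF rep kc])
  have kx: "\<psi>' (xm b) = \<psi> (xm b)" for b
  proof -
    have "k \<cdot> xm b \<cdot> minv k = xm b" by (simp add: k_def xm_def minv_def)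
    then show ?thesis by (simp add: \<psi>'_def)
  qed
  have U1': "\<forall>b. \<psi>' (xm b) \<in> range (\<lambda>b::'a. nat_map (xm b))" using U1 kx by simp
  have U2': "\<forall>c. \<exists>b. \<psi>' (xm b) = nat_map (xm c)" using U2 kx by simp
  have ek: "minv k \<cdot> e \<cdot> k = dm a"
  proof -
    have "minv k \<cdot> e \<cdot> k = (a, a*c + \<beta> - c * inverse a, 0, inverse a)"
      by (simp add: k_def xm_def minv_def eq d algebra_simps)
    also have "a*c + \<beta> - c * inverse a = 0" using cc by (simp add: algebra_simps)
    finally show ?thesis by (simp add: dm_def)
  qed
  have psida: "\<psi>' (dm a) = nat_map (dm a0)"
    using ek conj_back[OF kc, of e] ee by (simp add: \<psi>'_def)
  have D: "\<forall>t. t \<noteq> 0 \<longrightarrow> (\<exists>s. dm s \<in> carrier SL2 \<and> \<psi>' (dm s) = nat_map (dm t))"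
  proof (intro allI impI)
    fix t :: 'a assume t: "t \<noteq> 0"
    have "nat_map (t, 0, 0, inverse t) \<in> \<psi> ` carrier SL2" using Bor t by blast
    then obtain f where fc: "f \<in> carrier SL2" and fe0: "\<psi> f = nat_map (t, 0, 0, inverse t)"
      by (metis imageE)
    define f' where "f' = minv k \<cdot> f \<cdot> k"
    have f'c: "f' \<in> carrier SL2" unfolding f'_def
      using SL2_mult_closed[OF SL2_mult_closed[OF minv_carrier[OF kc] fc] kc] .
    have f'e0: "\<psi>' f' = nat_map (t, 0, 0, inverse t)"
      using conj_back[OF kc, of f] fe0 by (simp add: \<psi>'_def f'_def)
    have f'e: "\<psi>' f' = nat_map (dm t)" using f'e0 by (simp add: dm_def)
    have c0': "fst (snd (snd f')) = 0" by (rule E3[OF rep' U1' U2' f'c f'e0 t])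
    obtain a' \<beta>' d' where feq: "f' = (a', \<beta>', 0, d')" using c0' by (cases f') auto
    have ad': "a' * d' = 1" using f'c by (simp add: SL2_carrier feq)
    have dac: "dm a \<in> carrier SL2" using dm_carrier[OF a] .
    have "\<psi>' (f' \<cdot> dm a) = \<psi>' (dm a \<cdot> f')"
    proof -
      have "\<psi>' (f' \<cdot> dm a) = nat_map (dm t \<cdot> dm a0)"
        using isrepD(2)[OF rep' f'c dac] f'e psida by (simp add: nat_map_mult)
      also have "dm t \<cdot> dm a0 = dm a0 \<cdot> dm t" by (simp add: dm_def mult.commute)
      also have "nat_map (dm a0 \<cdot> dm t) = \<psi>' (dm a \<cdot> f')"
        using isrepD(2)[OF rep' dac f'c] f'e psida by (simp add: nat_map_mult)
      finally show ?thesis .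
    qed
    then have "f' \<cdot> dm a = dm a \<cdot> f'"
      by (rule inj_onD[OF isrepD(3)[OF rep'] _ SL2_mult_closed[OF f'c dac] SL2_mult_closed[OF dac f'c]])
    then have "\<beta>' * inverse a = a * \<beta>'" by (simp add: feq dm_def)
    then have "\<beta>' * (inverse a - a) = 0" by (simp add: algebra_simps)
    moreover have "inverse a - a \<noteq> 0" using ai by simp
    ultimately have b0: "\<beta>' = 0" by simp
    have "d' = inverse a'" using ad' by (metis inverse_unique)
    then have "f' = dm a'" using b0 by (simp add: feq dm_def)
    then show "\<exists>s. dm s \<in> carrier SL2 \<and> \<psi>' (dm s) = nat_map (dm t)" using f'c f'e by metis
  qed
  show ?thesis using rep' img U1' U2' D by blast
qed


lemma E5:
  fixes a :: "'a::field" and \<psi> :: "'a mat \<Rightarrow> ('a \<times> 'a \<Rightarrow> 'a \<times> 'a)"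
  assumes rep: "isrep \<psi>"
    and D: "\<forall>t. t \<noteq> 0 \<longrightarrow> (\<exists>s. dm s \<in> carrier SL2 \<and> \<psi> (dm s) = nat_map (dm t))"
    and good: "a \<noteq> 0" "a + 1 \<noteq> 0" "a * a + a + 1 \<noteq> 0" and \<beta>: "\<beta> \<noteq> 0"
  shows "fst (\<psi> (wm \<beta>) (x, 0)) = 0" and "snd (\<psi> (wm \<beta>) (0, y)) = 0"
proof -
  define m where "m = \<psi> (wm \<beta>)"
  have wc: "wm \<beta> \<in> carrier SL2" using \<beta> by simp
  have lin: "fp_linear m" unfolding m_def by (rule isrep_lin[OF rep wc])
  have comm: "m (nat_map (dm t) v) = nat_map (dm (inverse t)) (m v)" if t: "t \<noteq> 0" for t v
  proof -
    obtain s where sc: "dm s \<in> carrier SL2" and se: "\<psi> (dm s) = nat_map (dm t)" using D t by blast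
    have s: "s \<noteq> 0" using sc by (auto simp: dm_def SL2_carrier)
    have tc: "dm t \<in> carrier SL2" by (rule dm_carrier[OF t])
    have inv: "\<psi> (dm (inverse s)) = nat_map (dm (inverse t))"
      using isrep_minv_nat[OF rep sc se tc] by (simp add: dm_def minv_def)
    have wd: "wm \<beta> \<cdot> dm s = dm (inverse s) \<cdot> wm \<beta>" using s \<beta> by (simp add: wm_def dm_def)
    have isc: "dm (inverse s) \<in> carrier SL2" using s by (simp add: dm_carrier)
    have "m \<circ> nat_map (dm t) = \<psi> (wm \<beta> \<cdot> dm s)"
      using isrepD(2)[OF rep wc sc] se by (simp add: m_def)
    also have "\<dots> = \<psi> (dm (inverse s) \<cdot> wm \<beta>)" by (simp only: wd)
    also have "\<dots> = nat_map (dm (inverse t)) \<circ> m"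
      using isrepD(2)[OF rep isc wc] inv by (simp add: m_def)
    finally show ?thesis by (metis comp_apply)
  qed
  have addm: "m (ua + va, ub + vb) = (fst (m (ua,ub)) + fst (m (va,vb)), snd (m (ua,ub)) + snd (m (va,vb)))"
    for ua ub va vb
  proof -
    have "m (vadd (ua,ub) (va,vb)) = vadd (m (ua,ub)) (m (va,vb))" using lin by (simp add: fp_linear_def)
    then show ?thesis by (simp add: vadd_def)
  qed
  show "fst (m (x, 0)) = 0" unfolding m_def[symmetric]
  proof (rule lemmaZ[where \<alpha> = "\<lambda>x. fst (m (x, 0))", OF _ _ good])
    fix x y :: 'a show "fst (m (x + y, 0)) = fst (m (x, 0)) + fst (m (y, 0))"
      using addm[where ua=x and ub=0 and va=y and vb=0] by simp
  next
    fix t x :: 'a assume t: "t \<noteq> 0"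
    have "m (nat_map (dm t) (x,0)) = nat_map (dm (inverse t)) (m (x,0))" by (rule comm[OF t])
    then have "m (t * x, 0) = nat_map (dm (inverse t)) (m (x,0))" by (simp add: nat_map_dm)
    then show "fst (m (t * x, 0)) = inverse t * fst (m (x, 0))"
      by (cases "m (x,0)") (simp add: nat_map_dm)
  qed
  show "snd (m (0, y)) = 0" unfolding m_def[symmetric]
  proof (rule lemmaZ[where \<alpha> = "\<lambda>y. snd (m (0, y))", OF _ _ good])
    fix x y :: 'a show "snd (m (0, x + y)) = snd (m (0, x)) + snd (m (0, y))"
      using addm[where ua=0 and ub=x and va=0 and vb=y] by simp
  next
    fix t x :: 'a assume t: "t \<noteq> 0"
    have it: "inverse t \<noteq> 0" using t by simp
    have "m (nat_map (dm (inverse t)) (0,x)) = nat_map (dm (inverse (inverse t))) (m (0,x))" by (rule comm[OF it])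
    then have "m (0, t * x) = nat_map (dm t) (m (0,x))" by (simp add: nat_map_dm)
    then show "snd (m (0, t * x)) = inverse t * snd (m (0, x))"
      by (cases "m (0,x)") (simp add: nat_map_dm)
  qed
qed


lemma E6:
  fixes a :: "'a::field" and \<psi> :: "'a mat \<Rightarrow> ('a \<times> 'a \<Rightarrow> 'a \<times> 'a)"
  assumes rep: "isrep \<psi>" and U1: "\<forall>b. \<psi> (xm b) \<in> range (\<lambda>b::'a. nat_map (xm b))"
    and U2: "\<forall>c. \<exists>b. \<psi> (xm b) = nat_map (xm c)"
    and D: "\<forall>t. t \<noteq> 0 \<longrightarrow> (\<exists>s. dm s \<in> carrier SL2 \<and> \<psi> (dm s) = nat_map (dm t))"
    and good: "a \<noteq> 0" "a + 1 \<noteq> 0" "a * a + a + 1 \<noteq> 0"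
  shows "nat_map (ym c) \<in> \<psi> ` carrier SL2"
proof -
  define n where "n = \<psi> (wm 1)"
  have w1: "wm (1::'a) \<in> carrier SL2" by simp
  have n0: "n (x, 0) = (0, snd (n (x, 0)))" for x
    using E5(1)[OF rep D good, of 1 x] by (cases "n (x,0)") (simp add: n_def)
  have n0': "n (0, y) = (fst (n (0, y)), 0)" for y
    using E5(2)[OF rep D good, of 1 y] by (cases "n (0,y)") (simp add: n_def)
  have linn: "fp_linear n" unfolding n_def by (rule isrep_lin[OF rep w1])
  have split: "n (x, y) = (fst (n (0, y)), snd (n (x, 0)))" for x y
  proof -
    have "n (vadd (x,0) (0,y)) = vadd (n (x,0)) (n (0,y))" using linn by (simp add: fp_linear_def)
    then have "n (x, y) = vadd (n (x,0)) (n (0,y))" by (simp add: vadd_def)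
    also have "\<dots> = vadd (0, snd (n (x, 0))) (fst (n (0, y)), 0)" using n0 n0' by metis
    finally show ?thesis by (simp add: vadd_def)
  qed
  have surjn: "surj n" using isrep_bij[OF rep w1] bij_is_surj unfolding n_def by blast
  have G: "fst (\<psi> (ym c') (x, 0)) = x \<and> \<psi> (ym c') (0, y) = (0, y)" for c' x y
  proof -
    define g where "g = \<psi> (ym c')"
    have rel: "ym c' \<cdot> wm 1 = wm 1 \<cdot> xm (- c')" by (simp add: ym_def wm_def xm_def)
    obtain b where b: "\<psi> (xm (- c')) = nat_map (xm b)" using U1 by blast
    have "g \<circ> n = \<psi> (ym c' \<cdot> wm 1)" using isrepD(2)[OF rep ym_carrier w1] by (simp add: g_def n_def)
    also have "\<dots> = \<psi> (wm 1 \<cdot> xm (- c'))" by (simp only: rel)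
    also have "\<dots> = n \<circ> nat_map (xm b)" using isrepD(2)[OF rep w1 xm_carrier] b by (simp add: n_def)
    finally have gn: "g (n v) = n (nat_map (xm b) v)" for v by (metis comp_apply)
    obtain u where u: "n u = (x, 0)" using surjn by (metis surjD)
    obtain ua ub where uu: "u = (ua, ub)" by (cases u) auto
    have "fst (n (0, ub)) = x" using u split[of ua ub] uu by simp
    then have nub: "n (0, ub) = (x, 0)" using n0'[of ub] by simp
    have "g (x, 0) = n (b * ub, ub)" using gn[of "(0, ub)"] nub by (simp add: nat_map_xm)
    then have gx: "fst (g (x, 0)) = x" using split[of "b * ub" ub] nub by simp
    obtain u' where u': "n u' = (0, y)" using surjn by (metis surjD)
    obtain va vb where vv: "u' = (va, vb)" by (cases u') auto
    have "snd (n (va, 0)) = y" using u' split[of va vb] vv by simp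
    then have nva: "n (va, 0) = (0, y)" using n0[of va] by simp
    have "g (0, y) = (0, y)" using gn[of "(va, 0)"] nva by (simp add: nat_map_xm)
    then show ?thesis using gx by (simp add: g_def)
  qed
  show ?thesis
  proof (cases "c = 0")
    case True
    have "nat_map (ym c) = \<psi> (1,0,0,1)" using True isrep_one[OF rep] nat_map_one by (simp add: ym_def)
    then show ?thesis by (simp add: SL2_carrier)
  next
    case False
    define b' where "b' = - inverse c"
    have b'0: "b' \<noteq> 0" using False by (simp add: b'_def)
    obtain b where b: "\<psi> (xm b) = nat_map (xm b')" using U2 by blast
    have b0: "b \<noteq> 0"
    proof
      assume "b = 0"
      then have "nat_map (xm b') = \<psi> (xm 0)" using b by simp
      also have "\<dots> = nat_map (1,0,0,1)" by (simp only: xm_zero isrep_one[OF rep] nat_map_one)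
      finally have "nat_map (xm b') = nat_map (1,0,0,1)" .
      then have "xm b' = (1,0,0,1)" by (rule nat_map_inj)
      then show False using b'0 by (simp add: xm_def)
    qed
    define g where "g = \<psi> (ym (- inverse b))"
    have wb: "wm b = xm b \<cdot> ym (- inverse b) \<cdot> xm b" using b0 by (simp add: wm_def xm_def ym_def)
    have "\<psi> (wm b) = \<psi> (xm b) \<circ> g \<circ> \<psi> (xm b)"
      using isrepD(2)[OF rep SL2_mult_closed[OF xm_carrier ym_carrier] xm_carrier]
        isrepD(2)[OF rep xm_carrier ym_carrier] wb by (simp add: g_def)
    then have mw: "\<psi> (wm b) v = nat_map (xm b') (g (nat_map (xm b') v))" for v using b by simp
    have gx: "g (x, 0) = (x, c * x)" for x
    proof -
      have f1: "fst (g (x, 0)) = x" using G unfolding g_def by blast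
      have "fst (\<psi> (wm b) (x, 0)) = 0" by (rule E5(1)[OF rep D good b0])
      then have "fst (nat_map (xm b') (g (x, 0))) = 0" using mw[of "(x,0)"] by (simp add: nat_map_xm)
      then have "x + b' * snd (g (x, 0)) = 0" using f1 by (cases "g (x,0)") (simp add: nat_map_xm)
      then have "snd (g (x, 0)) = c * x" using False by (simp add: b'_def field_simps)
      then show ?thesis using f1 by (cases "g (x,0)") simp
    qed
    have g0: "g (0, y) = (0, y)" for y using G unfolding g_def by blast
    have ling: "fp_linear g" unfolding g_def by (rule isrep_lin[OF rep ym_carrier])
    have "g = nat_map (ym c)"
    proof (rule ext)
      fix v :: "'a \<times> 'a"
      obtain x y where v: "v = (x, y)" by (cases v) auto
      have "g (vadd (x,0) (0,y)) = vadd (g (x,0)) (g (0,y))" using ling by (simp add: fp_linear_def)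
      then have "g (x, y) = (x, c * x + y)" by (simp add: vadd_def gx g0)
      then show "g v = nat_map (ym c) v" by (simp add: v nat_map_ym)
    qed
    then show ?thesis unfolding g_def by (metis image_eqI ym_carrier)
  qed
qed

lemma E7:
  fixes \<psi> :: "'a::{finite,field} mat \<Rightarrow> ('a \<times> 'a \<Rightarrow> 'a \<times> 'a)"
  assumes rep: "isrep \<psi>" and X: "\<And>c. nat_map (xm c) \<in> \<psi> ` carrier SL2"
    and Y: "\<And>c. nat_map (ym c) \<in> \<psi> ` carrier SL2"
  shows "\<psi> ` carrier SL2 = natG"
proof -
  have sub: "natG \<subseteq> \<psi> ` carrier SL2"
  proof
    fix f :: "'a \<times> 'a \<Rightarrow> 'a \<times> 'a" assume "f \<in> natG"
    then obtain A where A: "A \<in> carrier SL2" "f = nat_map A" unfolding natG_def by blast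
    have P3: "nat_map (xm s \<cdot> ym c \<cdot> xm t) \<in> \<psi> ` carrier SL2" for s c t
      using isrep_prod[OF rep isrep_prod[OF rep X Y] X] by (simp add: nat_map_mult)
    from SL2_gen[OF A(1)] show "f \<in> \<psi> ` carrier SL2"
    proof
      assume "\<exists>s c t. A = xm s \<cdot> ym c \<cdot> xm t"
      then show ?thesis using P3 A(2) by blast
    next
      assume "\<exists>s c t. A = ym (- 1) \<cdot> (xm s \<cdot> ym c \<cdot> xm t)"
      then obtain s c t where "A = ym (- 1) \<cdot> (xm s \<cdot> ym c \<cdot> xm t)" by blast
      then have "f = nat_map (ym (-1)) \<circ> nat_map (xm s \<cdot> ym c \<cdot> xm t)" using A(2) by (simp add: nat_map_mult)
      then show ?thesis using isrep_prod[OF rep Y P3] by simp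
    qed
  qed
  have "card (\<psi> ` carrier SL2) = card (carrier (SL2::'a mat monoid))"
    by (rule card_image[OF isrepD(3)[OF rep]])
  also have "\<dots> = card (natG :: ('a \<times> 'a \<Rightarrow> 'a \<times> 'a) set)" unfolding natG_def
    by (rule sym, rule card_image) (auto intro: inj_onI nat_map_inj)
  finally have "card (natG :: ('a \<times> 'a \<Rightarrow> 'a \<times> 'a) set) = card (\<psi> ` carrier SL2)" by simp
  then show ?thesis using sub by (intro card_subset_eq[symmetric]) simp_all
qed

lemma core_gt3:
  fixes a a0 :: "'a::{finite,field}" and \<psi> :: "'a mat \<Rightarrow> ('a \<times> 'a \<Rightarrow> 'a \<times> 'a)"
  assumes rep: "isrep \<psi>"
    and Bor: "\<forall>a b. a \<noteq> 0 \<longrightarrow> nat_map (a, b, 0, inverse a) \<in> \<psi> ` carrier SL2"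
    and p: "prime p" and q: "card (UNIV::'a set) = p ^ m" and m: "m \<ge> 1"
    and good: "a \<noteq> 0" "a + 1 \<noteq> 0" "a * a + a + 1 \<noteq> 0"
    and a0: "a0 \<noteq> 0" "a0 * a0 \<noteq> 1"
  shows "\<psi> ` carrier SL2 = natG"
proof -
  have xs: "\<forall>b. nat_map (xm b) \<in> \<psi> ` carrier SL2"
  proof
    fix b :: 'a
    have "nat_map (1, b, 0, inverse 1) \<in> \<psi> ` carrier SL2" using Bor[rule_format, of "1::'a" b] by simp
    then show "nat_map (xm b) \<in> \<psi> ` carrier SL2" by (simp add: xm_def)
  qed
  obtain \<psi>1 where rep1: "isrep \<psi>1" and img1: "\<psi>1 ` carrier SL2 = \<psi> ` carrier SL2"
    and U1: "\<forall>b. \<psi>1 (xm b) \<in> range (\<lambda>b::'a. nat_map (xm b))" and U2: "\<forall>c. \<exists>b. \<psi>1 (xm b) = nat_map (xm c)"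
    using E2[OF rep xs p q m] by blast
  have Bor1: "\<forall>a b. a \<noteq> 0 \<longrightarrow> nat_map (a, b, 0, inverse a) \<in> \<psi>1 ` carrier SL2"
    using Bor img1 by simp
  obtain \<psi>2 where rep2: "isrep \<psi>2" and img2: "\<psi>2 ` carrier SL2 = \<psi>1 ` carrier SL2"
    and U1': "\<forall>b. \<psi>2 (xm b) \<in> range (\<lambda>b::'a. nat_map (xm b))" and U2': "\<forall>c. \<exists>b. \<psi>2 (xm b) = nat_map (xm c)"
    and D: "\<forall>t. t \<noteq> 0 \<longrightarrow> (\<exists>s. dm s \<in> carrier SL2 \<and> \<psi>2 (dm s) = nat_map (dm t))"
    using E4[OF rep1 U1 U2 Bor1 a0] by blast
  have Y: "nat_map (ym c) \<in> \<psi> ` carrier SL2" for c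
    using E6[OF rep2 U1' U2' D good] img2 img1 by simp
  show ?thesis by (rule E7[OF rep]) (use xs Y in auto)
qed


definition matf :: "('a::field \<times> 'a \<Rightarrow> 'a \<times> 'a) \<Rightarrow> 'a mat" where
  "matf f = (fst (f (1,0)), fst (f (0,1)), snd (f (1,0)), snd (f (0,1)))"

definition mdet :: "'a::field mat \<Rightarrow> 'a" where
  "mdet A = (case A of (a,b,c,d) \<Rightarrow> a*d - b*c)"

lemma mdet_mult: "mdet ((A::'a::field mat) \<cdot> B) = mdet A * mdet B"
  by (cases A; cases B) (simp add: mdet_def algebra_simps)

lemma mdet_carrier: "(A::'a::field mat) \<in> carrier SL2 \<longleftrightarrow> mdet A = 1"
  by (cases A) (simp add: mdet_def SL2_carrier)

lemma F3_facts:
  assumes c3: "card (UNIV :: 'a::{finite,field} set) = 3" and two: "(2::'a) \<noteq> 0"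
  shows "(3::'a) = 0" and "\<And>x::'a. x = 0 \<or> x = 1 \<or> x = 2"
proof -
  show three: "(3::'a) = 0"
  proof (rule ccontr)
    assume h: "(3::'a) \<noteq> 0"
    have "card {0::'a, 1, 2, 3} = 4"
    proof -
      have d: "(0::'a) \<noteq> 1" "(0::'a) \<noteq> 2" "(0::'a) \<noteq> 3" "(1::'a) \<noteq> 2" "(1::'a) \<noteq> 3" "(2::'a) \<noteq> 3"
      proof -
        show "(0::'a) \<noteq> 1" by simp
        show "(0::'a) \<noteq> 2" using two by auto
        show "(0::'a) \<noteq> 3" using h by auto
        show "(1::'a) \<noteq> 2"
        proof assume "(1::'a) = 2" then have "(2::'a) - 1 = 0" by simp then show False by simp qed
        show "(1::'a) \<noteq> 3"
        proof assume "(1::'a) = 3" then have "(3::'a) - 1 = 0" by simp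
          then have "(2::'a) = 0" by simp then show False using two by simp qed
        show "(2::'a) \<noteq> 3"
        proof assume "(2::'a) = 3" then have "(3::'a) - 2 = 0" by simp then show False by simp qed
      qed
      then show ?thesis by simp
    qed
    moreover have "card {0::'a, 1, 2, 3} \<le> card (UNIV :: 'a set)" by (rule card_mono) auto
    ultimately show False using c3 by simp
  qed
  have d: "(0::'a) \<noteq> 1" "(0::'a) \<noteq> 2" "(1::'a) \<noteq> 2"
  proof -
    show "(0::'a) \<noteq> 1" by simp
    show "(0::'a) \<noteq> 2" using two by auto
    show "(1::'a) \<noteq> 2"
    proof assume "(1::'a) = 2" then have "(2::'a) - 1 = 0" by simp then show False by simp qed
  qed
  have "card {0::'a, 1, 2} = 3" using d by simp
  then have "{0::'a, 1, 2} = UNIV" using c3 by (intro card_subset_eq) auto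
  then show "\<And>x::'a. x = 0 \<or> x = 1 \<or> x = 2" by blast
qed

lemma core3:
  fixes \<psi> :: "'a::{finite,field} mat \<Rightarrow> ('a \<times> 'a \<Rightarrow> 'a \<times> 'a)"
  assumes rep: "isrep \<psi>" and c3: "card (UNIV :: 'a set) = 3" and two: "(2::'a) \<noteq> 0"
  shows "\<psi> ` carrier SL2 = natG"
proof -
  have three: "(3::'a) = 0" and all3: "\<And>x::'a. x = 0 \<or> x = 1 \<or> x = 2" using F3_facts[OF c3 two] by auto
  have ofn: "\<exists>k::nat. x = of_nat k" for x :: 'a
  proof -
    consider "x = 0" | "x = 1" | "x = 2" using all3[of x] by blast
    then show ?thesis
    proof cases
      case 1 then show ?thesis by (intro exI[of _ 0]) simp
    next
      case 2 then show ?thesis by (intro exI[of _ 1]) simp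
    next
      case 3 then show ?thesis by (intro exI[of _ 2]) simp
    qed
  qed
  have linf: "f = nat_map (matf f)" if f: "f \<in> carrier GLV" for f :: "'a \<times> 'a \<Rightarrow> 'a \<times> 'a"
  proof (rule ext)
    fix v :: "'a \<times> 'a"
    obtain x y where v: "v = (x,y)" by (cases v) auto
    have lin: "fp_linear f" using f by (simp add: GLV_def)
    have sm: "f (smul c w) = smul c (f w)" for c w
    proof -
      obtain k where ck: "c = of_nat k" using ofn by blast
      have "f (smul (of_nat k) w) = smul (of_nat k) (f w)" using lin unfolding fp_linear_def by blast
      then show ?thesis by (simp only: ck)
    qed
    have "f (x, y) = f (vadd (smul x (1,0)) (smul y (0,1)))" by (simp add: vadd_def smul_def)
    also have "\<dots> = vadd (f (smul x (1,0))) (f (smul y (0,1)))" using lin unfolding fp_linear_def by blast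
    also have "\<dots> = vadd (smul x (f (1,0))) (smul y (f (0,1)))" using sm by simp
    finally show "f v = nat_map (matf f) v"
      by (simp add: v vadd_def smul_def matf_def algebra_simps)
  qed
  have detnz: "mdet (matf f) \<noteq> 0" if f: "f \<in> carrier GLV" for f :: "'a \<times> 'a \<Rightarrow> 'a \<times> 'a"
  proof
    assume dz: "mdet (matf f) = 0"
    obtain a b c d where M: "matf f = (a,b,c,d)" by (cases "matf f") auto
    have dz': "a*d - b*c = 0" using dz by (simp add: M mdet_def)
    have inj: "inj f" using f by (simp add: GLV_def bij_is_inj)
    have f0: "f (0,0) = (0,0)" using linf[OF f] by (simp add: M)
    have "f (d, -c) = (0,0)" using linf[OF f] dz' by (simp add: M algebra_simps)
    then have "f (d, -c) = f (0,0)" using f0 by simp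
    then have "(d, -c) = (0,0)" by (rule injD[OF inj])
    then have e1: "d = 0 \<and> c = 0" by simp
    have "f (-b, a) = (0,0)" using linf[OF f] dz' by (simp add: M algebra_simps)
    then have "f (-b, a) = f (0,0)" using f0 by simp
    then have "(-b, a) = (0,0)" by (rule injD[OF inj])
    then have e2: "b = 0 \<and> a = 0" by simp
    have "f (1, 0) = (0,0)" using linf[OF f] e1 e2 by (simp add: M)
    then have "f (1, 0) = f (0,0)" using f0 by simp
    then have "(1::'a, 0::'a) = (0,0)" by (rule injD[OF inj])
    then show False by simp
  qed
  have matmul: "matf (f \<circ> g) = matf f \<cdot> matf g" if "f \<in> carrier GLV" "g \<in> carrier GLV" for f g :: "'a \<times> 'a \<Rightarrow> 'a \<times> 'a"
  proof -
    have fg: "f \<circ> g \<in> carrier GLV" using that by (auto simp: GLV_def bij_comp fp_linear_comp)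
    have "nat_map (matf (f \<circ> g)) = nat_map (matf f \<cdot> matf g)"
      by (simp only: nat_map_mult linf[OF that(1), symmetric] linf[OF that(2), symmetric] linf[OF fg, symmetric])
    then show ?thesis by (rule nat_map_inj)
  qed
  define \<chi> where "\<chi> = (\<lambda>A. mdet (matf (\<psi> A)))"
  have chimul: "\<chi> (A \<cdot> B) = \<chi> A * \<chi> B" if "A \<in> carrier SL2" "B \<in> carrier SL2" for A B
    using isrepD(2)[OF rep that] matmul[OF isrepD(1)[OF rep that(1)] isrepD(1)[OF rep that(2)]]
    by (simp add: \<chi>_def mdet_mult)
  have chisq: "\<chi> A * \<chi> A = 1" if "A \<in> carrier SL2" for A
  proof -
    have "\<chi> A \<noteq> 0" using detnz[OF isrepD(1)[OF rep that]] by (simp add: \<chi>_def)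
    then have "\<chi> A = 1 \<or> \<chi> A = 2" using all3 by blast
    moreover have "(2::'a) * 2 = 1"
    proof -
      have "(2::'a) * 2 = 3 + 1" by simp
      then show ?thesis using three by simp
    qed
    ultimately show ?thesis by auto
  qed
  have chix: "\<chi> (xm b) = 1" for b
  proof -
    have "xm b = xm (2*b) \<cdot> xm (2*b)"
    proof -
      have "(2::'a)*b + 2*b = 3*b + b" by (simp add: algebra_simps)
      also have "\<dots> = b" using three by simp
      finally have e: "(2::'a)*b + 2*b = b" .
      show ?thesis by (simp only: xm_mult e)
    qed
    then show ?thesis using chimul[OF xm_carrier xm_carrier] chisq[OF xm_carrier] by simp
  qed
  have chiy: "\<chi> (ym c) = 1" for c
  proof -
    have "ym c = ym (2*c) \<cdot> ym (2*c)"
    proof -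
      have "(2::'a)*c + 2*c = 3*c + c" by (simp add: algebra_simps)
      also have "\<dots> = c" using three by simp
      finally have e: "(2::'a)*c + 2*c = c" .
      show ?thesis by (simp add: ym_def e)
    qed
    then show ?thesis using chimul[OF ym_carrier ym_carrier] chisq[OF ym_carrier] by simp
  qed
  have sub: "\<psi> ` carrier SL2 \<subseteq> natG"
  proof
    fix f assume "f \<in> \<psi> ` carrier SL2"
    then obtain A where A: "A \<in> carrier SL2" "f = \<psi> A" by blast
    have "\<chi> A = 1"
      using SL2_gen[OF A(1)]
    proof
      assume "\<exists>s c t. A = xm s \<cdot> ym c \<cdot> xm t"
      then obtain s c t where "A = xm s \<cdot> ym c \<cdot> xm t" by blast
      moreover have "\<chi> (xm s \<cdot> ym c \<cdot> xm t) = 1"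
        using chimul[OF SL2_mult_closed[OF xm_carrier ym_carrier] xm_carrier] chimul[OF xm_carrier ym_carrier] chix chiy by simp
      ultimately show ?thesis by simp
    next
      assume "\<exists>s c t. A = ym (- 1) \<cdot> (xm s \<cdot> ym c \<cdot> xm t)"
      then obtain s c t where "A = ym (- 1) \<cdot> (xm s \<cdot> ym c \<cdot> xm t)" by blast
      moreover have "\<chi> (xm s \<cdot> ym c \<cdot> xm t) = 1"
        using chimul[OF SL2_mult_closed[OF xm_carrier ym_carrier] xm_carrier] chimul[OF xm_carrier ym_carrier] chix chiy by simp
      moreover have "\<chi> (ym (- 1) \<cdot> (xm s \<cdot> ym c \<cdot> xm t)) = \<chi> (ym (-1)) * \<chi> (xm s \<cdot> ym c \<cdot> xm t)"
        by (rule chimul[OF ym_carrier SL2_mult_closed[OF SL2_mult_closed[OF xm_carrier ym_carrier] xm_carrier]])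
      ultimately show ?thesis using chiy by simp
    qed
    then have "matf f \<in> carrier SL2" using A by (simp add: \<chi>_def mdet_carrier)
    moreover have "f = nat_map (matf f)" unfolding A(2) by (rule linf[OF isrepD(1)[OF rep A(1)]])
    ultimately show "f \<in> natG" unfolding natG_def by blast
  qed
  have "card (\<psi> ` carrier SL2) = card (carrier (SL2::'a mat monoid))"
    by (rule card_image[OF isrepD(3)[OF rep]])
  also have "\<dots> = card (natG :: ('a \<times> 'a \<Rightarrow> 'a \<times> 'a) set)" unfolding natG_def
    by (rule sym, rule card_image) (auto intro: inj_onI nat_map_inj)
  finally show ?thesis using sub by (intro card_subset_eq) simp_all
qed


lemma minv_mult: "minv ((A::'a::field mat) \<cdot> B) = minv B \<cdot> minv A"
  by (cases A; cases B) (simp add: minv_def algebra_simps)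

lemma glv_conj_rep:
  fixes \<psi> :: "'a::field mat \<Rightarrow> ('a \<times> 'a \<Rightarrow> 'a \<times> 'a)"
  assumes rep: "isrep \<psi>" and h: "h \<in> carrier SL2"
  shows "isrep (\<lambda>A. nat_map (minv h) \<circ> \<psi> A \<circ> nat_map h)"
  unfolding isrep_def
proof (intro conjI ballI)
  fix A :: "'a mat" assume A: "A \<in> carrier SL2"
  have "nat_map (minv h) \<in> carrier GLV" "nat_map h \<in> carrier GLV" "\<psi> A \<in> carrier GLV"
    using nat_map_GLV[OF minv_carrier[OF h]] nat_map_GLV[OF h] isrepD(1)[OF rep A] by auto
  then show "nat_map (minv h) \<circ> \<psi> A \<circ> nat_map h \<in> carrier GLV"
    by (auto simp: GLV_def bij_comp fp_linear_comp)
next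
  fix A B :: "'a mat" assume A: "A \<in> carrier SL2" and B: "B \<in> carrier SL2"
  have c0: "nat_map h \<circ> nat_map (minv h) = id" using nat_map_comp_minv[OF h] by simp
  have "nat_map h \<circ> (nat_map (minv h) \<circ> X) = X" for X :: "'a \<times> 'a \<Rightarrow> 'a \<times> 'a"
  proof -
    have "nat_map h \<circ> (nat_map (minv h) \<circ> X) = (nat_map h \<circ> nat_map (minv h)) \<circ> X" by (rule comp_assoc[symmetric])
    then show ?thesis using c0 by simp
  qed
  then show "nat_map (minv h) \<circ> \<psi> (A \<cdot> B) \<circ> nat_map h =
      (nat_map (minv h) \<circ> \<psi> A \<circ> nat_map h) \<circ> (nat_map (minv h) \<circ> \<psi> B \<circ> nat_map h)"
    using isrepD(2)[OF rep A B] by (simp add: comp_assoc)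
next
  show "inj_on (\<lambda>A. nat_map (minv h) \<circ> \<psi> A \<circ> nat_map h) (carrier SL2)"
  proof (rule inj_onI)
    fix A B :: "'a mat" assume A: "A \<in> carrier SL2" and B: "B \<in> carrier SL2"
      and e: "nat_map (minv h) \<circ> \<psi> A \<circ> nat_map h = nat_map (minv h) \<circ> \<psi> B \<circ> nat_map h"
    have "\<psi> A = \<psi> B"
    proof (rule ext)
      fix v
      have "nat_map (minv h) (\<psi> A (nat_map h (nat_map (minv h) v))) = nat_map (minv h) (\<psi> B (nat_map h (nat_map (minv h) v)))"
        using e by (metis comp_apply)
      then have "nat_map (minv h) (\<psi> A v) = nat_map (minv h) (\<psi> B v)" by (simp only: nat_map_minv_r[OF h])
      then have "nat_map h (nat_map (minv h) (\<psi> A v)) = nat_map h (nat_map (minv h) (\<psi> B v))" by simp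
      then show "\<psi> A v = \<psi> B v" by (simp only: nat_map_minv_r[OF h])
    qed
    then show "A = B" using inj_onD[OF isrepD(3)[OF rep] _ A B] by blast
  qed
qed

lemma sylow_part:
  fixes S :: "('a::{finite,field} \<times> 'a \<Rightarrow> 'a \<times> 'a) set"
  assumes p: "prime p" and m: "m \<ge> 1" and q: "card (UNIV :: 'a set) = p ^ m"
    and syl: "is_sylow p natG S"
  shows "\<exists>h\<in>carrier SL2. S = (\<lambda>b. nat_map (h \<cdot> xm b \<cdot> minv h)) ` UNIV"
proof -
  let ?q = "card (UNIV :: 'a set)"
  have SG: "S \<subseteq> natG" and sub: "subgroup S GLV" and nd: "\<not> p dvd (card (natG :: ('a \<times> 'a \<Rightarrow> 'a \<times> 'a) set) div card S)"
    and ex: "\<exists>a. card S = p ^ a" using syl unfolding is_sylow_def by auto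
  obtain a where cS: "card S = p ^ a" using ex by blast
  define P where "P = {A \<in> carrier SL2. nat_map A \<in> S}"
  have injn: "inj_on nat_map (carrier (SL2::'a mat monoid))" by (auto intro: inj_onI nat_map_inj)
  have imgP: "nat_map ` P = S"
  proof (rule Set.set_eqI)
    fix f show "f \<in> nat_map ` P \<longleftrightarrow> f \<in> S"
    proof
      assume "f \<in> nat_map ` P" then show "f \<in> S" unfolding P_def by blast
    next
      assume fS: "f \<in> S"
      then have "f \<in> natG" using SG by blast
      then obtain A where "A \<in> carrier SL2" "f = nat_map A" unfolding natG_def by blast
      then show "f \<in> nat_map ` P" unfolding P_def using fS by blast
    qed
  qed
  have cP: "card P = p ^ a"
  proof -
    have "inj_on nat_map P" using injn unfolding P_def by (rule inj_on_subset) blast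
    then have "card (nat_map ` P) = card P" by (rule card_image)
    then show ?thesis using imgP cS by simp
  qed
  have subP: "subgroup P SL2"
  proof (rule group.subgroupI[OF group_SL2])
    show "P \<subseteq> carrier SL2" unfolding P_def by blast
    have "\<one>\<^bsub>GLV\<^esub> \<in> S" by (rule subgroup.one_closed[OF sub])
    then have "nat_map (1,0,0,1) \<in> S" by (subst nat_map_one) simp
    then have "(1,0,0,1) \<in> P" unfolding P_def by (simp add: SL2_carrier)
    then show "P \<noteq> {}" by blast
  next
    fix A assume "A \<in> P"
    then have A: "A \<in> carrier SL2" "nat_map A \<in> S" unfolding P_def by auto
    have "inv\<^bsub>GLV\<^esub> (nat_map A) \<in> S" using subgroup.m_inv_closed[OF sub A(2)] .
    then have "nat_map (minv A) \<in> S" using inv_GLV_nat[OF A(1)] by simp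
    then show "inv\<^bsub>SL2\<^esub> A \<in> P" unfolding P_def using inv_SL2[OF A(1)] minv_carrier[OF A(1)] by simp
  next
    fix A B assume "A \<in> P" "B \<in> P"
    then have A: "A \<in> carrier SL2" "nat_map A \<in> S" and B: "B \<in> carrier SL2" "nat_map B \<in> S"
      unfolding P_def by auto
    have "nat_map A \<otimes>\<^bsub>GLV\<^esub> nat_map B \<in> S" using subgroup.m_closed[OF sub A(2) B(2)] .
    then have "nat_map (A \<cdot> B) \<in> S" by (simp add: nat_map_mult)
    then show "A \<otimes>\<^bsub>SL2\<^esub> B \<in> P" unfolding P_def using SL2_mult_closed[OF A(1) B(1)] by blast
  qed
  have cG: "card (natG :: ('a \<times> 'a \<Rightarrow> 'a \<times> 'a) set) = ?q * (?q * ?q - 1)"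
  proof -
    have "card (natG :: ('a \<times> 'a \<Rightarrow> 'a \<times> 'a) set) = card (carrier (SL2::'a mat monoid))"
      unfolding natG_def by (rule card_image[OF injn])
    then show ?thesis using card_SL2 by simp
  qed
  have pq: "p dvd ?q" using q m by (simp add: dvd_power)
  have a1: "a \<ge> 1"
  proof (rule ccontr)
    assume "\<not> a \<ge> 1" then have "a = 0" by simp
    then have "card S = 1" using cS by simp
    then have "card (natG :: ('a \<times> 'a \<Rightarrow> 'a \<times> 'a) set) div card S = ?q * (?q * ?q - 1)" using cG by simp
    then show False using nd pq by simp
  qed
  obtain h where h: "h \<in> carrier SL2" "P \<subseteq> (\<lambda>b. h \<cdot> xm b \<cdot> minv h) ` UNIV"
    using sylow_SL2[OF subP cP a1 p q m] by blast
  have "card P \<le> ?q"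
    using card_mono[OF _ h(2)] card_conjU[OF h(1)] by simp
  then have "p ^ a \<le> p ^ m" using cP q by simp
  then have am: "a \<le> m" by (rule power_le_imp_le_exp[OF prime_gt_1_nat[OF p]])
  have "a = m"
  proof (rule ccontr)
    assume "a \<noteq> m" then have lt: "a < m" using am by simp
    have "?q = p ^ a * p ^ (m - a)" using q am by (simp add: power_add[symmetric])
    then have "card (natG :: ('a \<times> 'a \<Rightarrow> 'a \<times> 'a) set) div card S = p ^ (m - a) * (?q * ?q - 1)"
      using cG cS p by (simp add: prime_gt_0_nat)
    moreover have "p dvd p ^ (m - a)" using lt by (simp add: dvd_power)
    ultimately show False using nd by simp
  qed
  then have "card P = ?q" using cP q by simp
  then have "P = (\<lambda>b. h \<cdot> xm b \<cdot> minv h) ` UNIV"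
    using card_conjU[OF h(1)] h(2) by (intro card_subset_eq) simp_all
  then have "S = nat_map ` ((\<lambda>b. h \<cdot> xm b \<cdot> minv h) ` UNIV)" using imgP by simp
  then show ?thesis using h(1) by (auto simp: image_image)
qed


lemma norm_part:
  fixes S :: "('a::field \<times> 'a \<Rightarrow> 'a \<times> 'a) set"
  assumes h: "h \<in> carrier SL2" and S: "S = (\<lambda>c. nat_map (h \<cdot> xm c \<cdot> minv h)) ` UNIV" and a: "a \<noteq> 0"
  shows "nat_map (h \<cdot> (a, b, 0, inverse a) \<cdot> minv h) \<in> normalizer_in natG S"
proof -
  define \<beta> where "\<beta> = (a, b, 0::'a, inverse a)"
  have \<beta>c: "\<beta> \<in> carrier SL2" using a by (simp add: SL2_carrier \<beta>_def)
  define k where "k = h \<cdot> \<beta> \<cdot> minv h"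
  have kc: "k \<in> carrier SL2" unfolding k_def by (rule conj_closed[OF h \<beta>c])
  have mk: "minv k = h \<cdot> minv \<beta> \<cdot> minv h" by (simp add: k_def minv_mult SL2_assoc)
  have bx: "\<beta> \<cdot> xm c \<cdot> minv \<beta> = xm (a*a*c)" for c
    using a by (simp add: \<beta>_def xm_def minv_def field_simps)
  have key: "k \<cdot> (h \<cdot> xm c \<cdot> minv h) \<cdot> minv k = h \<cdot> xm (a*a*c) \<cdot> minv h" for c
  proof -
    have "k \<cdot> (h \<cdot> xm c \<cdot> minv h) \<cdot> minv k = h \<cdot> (\<beta> \<cdot> (minv h \<cdot> (h \<cdot> (xm c \<cdot> (minv h \<cdot> (h \<cdot> (minv \<beta> \<cdot> minv h)))))))"
      by (simp only: mk) (simp only: k_def SL2_assoc)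
    also have "\<dots> = h \<cdot> (\<beta> \<cdot> (xm c \<cdot> (minv \<beta> \<cdot> minv h)))" by (simp only: minv_cancel_l[OF h])
    also have "\<dots> = h \<cdot> (\<beta> \<cdot> xm c \<cdot> minv \<beta>) \<cdot> minv h" by (simp only: SL2_assoc)
    finally show ?thesis by (simp only: bx)
  qed
  have gk: "nat_map k \<otimes>\<^bsub>GLV\<^esub> s \<otimes>\<^bsub>GLV\<^esub> inv\<^bsub>GLV\<^esub> (nat_map k) = nat_map (k \<cdot> (h \<cdot> xm c \<cdot> minv h) \<cdot> minv k)"
    if "s = nat_map (h \<cdot> xm c \<cdot> minv h)" for s c
    using that inv_GLV_nat[OF kc] by (simp add: nat_map_mult)
  have "(\<lambda>s. nat_map k \<otimes>\<^bsub>GLV\<^esub> s \<otimes>\<^bsub>GLV\<^esub> inv\<^bsub>GLV\<^esub> (nat_map k)) ` S = S"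
  proof (rule Set.set_eqI)
    fix f show "f \<in> (\<lambda>s. nat_map k \<otimes>\<^bsub>GLV\<^esub> s \<otimes>\<^bsub>GLV\<^esub> inv\<^bsub>GLV\<^esub> (nat_map k)) ` S \<longleftrightarrow> f \<in> S"
    proof
      assume "f \<in> (\<lambda>s. nat_map k \<otimes>\<^bsub>GLV\<^esub> s \<otimes>\<^bsub>GLV\<^esub> inv\<^bsub>GLV\<^esub> (nat_map k)) ` S"
      then obtain c where "f = nat_map k \<otimes>\<^bsub>GLV\<^esub> nat_map (h \<cdot> xm c \<cdot> minv h) \<otimes>\<^bsub>GLV\<^esub> inv\<^bsub>GLV\<^esub> (nat_map k)"
        using S by blast
      then have "f = nat_map (h \<cdot> xm (a*a*c) \<cdot> minv h)" using gk[OF refl] key by simp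
      then show "f \<in> S" using S by blast
    next
      assume "f \<in> S"
      then obtain c where fc: "f = nat_map (h \<cdot> xm c \<cdot> minv h)" using S by blast
      define c' where "c' = c / (a*a)"
      have "a*a*c' = c" using a by (simp add: c'_def)
      then have "nat_map k \<otimes>\<^bsub>GLV\<^esub> nat_map (h \<cdot> xm c' \<cdot> minv h) \<otimes>\<^bsub>GLV\<^esub> inv\<^bsub>GLV\<^esub> (nat_map k) = f"
        using gk[OF refl, of c'] key[of c'] fc by simp
      moreover have "nat_map (h \<cdot> xm c' \<cdot> minv h) \<in> S" using S by blast
      ultimately show "f \<in> (\<lambda>s. nat_map k \<otimes>\<^bsub>GLV\<^esub> s \<otimes>\<^bsub>GLV\<^esub> inv\<^bsub>GLV\<^esub> (nat_map k)) ` S"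
        by (metis image_eqI)
    qed
  qed
  moreover have "nat_map k \<in> natG" unfolding natG_def using kc by blast
  ultimately show ?thesis unfolding normalizer_in_def k_def \<beta>_def by blast
qed

lemma good_exists:
  assumes ch: "\<And>k. (of_nat k :: 'a::{finite,field}) = 0 \<longleftrightarrow> p dvd k"
    and p: "prime p" and q: "card (UNIV :: 'a set) = p ^ m" and m: "m \<ge> 1"
    and n3: "card (UNIV :: 'a set) \<noteq> 3" and two: "(2::'a) \<noteq> 0"
  shows "\<exists>a::'a. a \<noteq> 0 \<and> a + 1 \<noteq> 0 \<and> a * a + a + 1 \<noteq> 0"
    and "\<exists>a0::'a. a0 \<noteq> 0 \<and> a0 * a0 \<noteq> 1"
proof -
  have "(\<exists>a::'a. a \<noteq> 0 \<and> a + 1 \<noteq> 0 \<and> a * a + a + 1 \<noteq> 0) \<and> (\<exists>a0::'a. a0 \<noteq> 0 \<and> a0 * a0 \<noteq> 1)"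
  proof (cases "p = 3")
    case False
    have "\<not> p dvd 3"
    proof
      assume "p dvd 3"
      then have le: "p \<le> 3" by (rule dvd_imp_le) simp
      have "p \<ge> 2" using p by (rule prime_ge_2_nat)
      then have "p = 2 \<or> p = 3" using le by auto
      then have "p = 3" using \<open>p dvd 3\<close> by auto
      then show False using False by simp
    qed
    then have t3: "(3::'a) \<noteq> 0" using ch[of 3] by simp
    have e3: "(1::'a) * 1 + 1 + 1 = 3" by simp
    have e2: "(1::'a) + 1 = 2" by simp
    have e4: "(2::'a) * 2 \<noteq> 1"
    proof
      assume "(2::'a) * 2 = 1"
      moreover have "(2::'a) * 2 = 3 + 1" by simp
      ultimately have "(3::'a) + 1 = 0 + 1" by simp
      then have "(3::'a) = 0" by (rule add_right_imp_eq)
      then show False using t3 by simp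
    qed
    have f1: "(1::'a) \<noteq> 0 \<and> (1::'a) + 1 \<noteq> 0 \<and> (1::'a) * 1 + 1 + 1 \<noteq> 0"
      using t3 two by (simp only: e2 e3 one_neq_zero not_False_eq_True simp_thms)
    have f2: "(2::'a) \<noteq> 0 \<and> (2::'a) * 2 \<noteq> 1" using two e4 by blast
    show ?thesis using f1 f2 by blast
  next
    case True
    have t3: "(3::'a) = 0" using ch[of 3] True by simp
    have "(3::nat) ^ 1 \<le> 3 ^ m" by (rule power_increasing[OF m]) simp
    then have "card (UNIV :: 'a set) \<ge> 3" using q True by simp
    then have gt: "card (UNIV :: 'a set) > 3" using n3 by simp
    have "\<not> UNIV \<subseteq> {0::'a, 1, 2}"
    proof
      assume "UNIV \<subseteq> {0::'a, 1, 2}"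
      then have "card (UNIV :: 'a set) \<le> card {0::'a, 1, 2}" by (intro card_mono) auto
      also have "\<dots> \<le> 3" using card_length[of "[0::'a, 1, 2]"] by simp
      finally show False using gt by simp
    qed
    then obtain a :: 'a where a: "a \<noteq> 0" "a \<noteq> 1" "a \<noteq> 2" by blast
    have m1: "(-1::'a) = 2" using t3 by (simp add: eq_neg_iff_add_eq_0)
    have "a + 1 \<noteq> 0"
    proof
      assume "a + 1 = 0" then have "a = -1" by (simp add: eq_neg_iff_add_eq_0)
      then show False using a m1 by simp
    qed
    moreover have "a * a + a + 1 \<noteq> 0"
    proof
      assume h: "a * a + a + 1 = 0"
      have "a * a + a + 1 = (a - 1) * (a - 1) + 3 * a" by (simp add: algebra_simps)
      then have "(a - 1) * (a - 1) = 0" using h t3 by simp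
      then show False using a by simp
    qed
    moreover have "a * a \<noteq> 1"
    proof
      assume h: "a * a = 1"
      have "(a - 1) * (a + 1) = a * a - 1" by (simp add: algebra_simps)
      then have "(a - 1) * (a + 1) = 0" using h by simp
      then show False using a \<open>a + 1 \<noteq> 0\<close> by simp
    qed
    ultimately show ?thesis using a by blast
  qed
  then show "\<exists>a::'a. a \<noteq> 0 \<and> a + 1 \<noteq> 0 \<and> a * a + a + 1 \<noteq> 0"
    and "\<exists>a0::'a. a0 \<noteq> 0 \<and> a0 * a0 \<noteq> 1" by blast+
qed


theorem lemma5p17:
  fixes p m :: nat
    and S L :: "('a::{finite,field} \<times> 'a \<Rightarrow> 'a \<times> 'a) set"
  assumes "prime p" and "odd p" and "m \<ge> 1"
    and "card (UNIV :: 'a set) = p ^ m"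
    and "is_sylow p natG S"
    and "subgroup L GLV"
    and "GLV\<lparr>carrier := L\<rparr> \<cong> (SL2 :: ('a \<times> 'a \<times> 'a \<times> 'a) monoid)"
    and "normalizer_in natG S \<subset> L"
  shows "L = natG"
proof -
  note p = assms(1) and m = assms(3) and q = assms(4) and syl = assms(5) and subL = assms(6)
  have ch: "\<And>k. (of_nat k :: 'a) = 0 \<longleftrightarrow> p dvd k" using char_facts[OF p q m] by blast
  have two: "(2::'a) \<noteq> 0"
  proof
    assume "(2::'a) = 0"
    then have "p dvd 2" using ch[of 2] by simp
    then have "p \<le> 2" by (rule dvd_imp_le) simp
    moreover have "p \<ge> 2" using p by (rule prime_ge_2_nat)
    ultimately have "p = 2" by simp
    then show False using assms(2) by simp
  qed
  obtain \<phi> where \<phi>: "\<phi> \<in> iso (GLV\<lparr>carrier := L\<rparr>) (SL2 :: 'a mat monoid)"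
    using assms(7) unfolding is_iso_def by blast
  have gL: "group (GLV\<lparr>carrier := L\<rparr>)" using subgroup.subgroup_is_group[OF subL group_GLV] .
  define \<psi> where "\<psi> = inv_into L \<phi>"
  have \<psi>iso: "\<psi> \<in> iso (SL2 :: 'a mat monoid) (GLV\<lparr>carrier := L\<rparr>)"
    using group.iso_set_sym[OF gL \<phi>] unfolding \<psi>_def by simp
  have LG: "L \<subseteq> carrier GLV" using subgroup.subset[OF subL] .
  have bij\<psi>: "bij_betw \<psi> (carrier SL2) L" using \<psi>iso unfolding iso_def by simp
  have hom\<psi>: "\<psi> \<in> hom (SL2 :: 'a mat monoid) (GLV\<lparr>carrier := L\<rparr>)" using \<psi>iso unfolding iso_def by simp
  have rep: "isrep \<psi>" unfolding isrep_def
  proof (intro conjI ballI)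
    fix A :: "'a mat" assume "A \<in> carrier SL2"
    then have "\<psi> A \<in> L" using bij\<psi> by (meson bij_betwE)
    then show "\<psi> A \<in> carrier GLV" using LG by blast
  next
    fix A B :: "'a mat" assume "A \<in> carrier SL2" "B \<in> carrier SL2"
    then show "\<psi> (A \<cdot> B) = \<psi> A \<circ> \<psi> B" using hom_mult[OF hom\<psi>] by simp
  next
    show "inj_on \<psi> (carrier SL2)" using bij\<psi> by (rule bij_betw_imp_inj_on)
  qed
  have img: "\<psi> ` carrier SL2 = L" using bij\<psi> by (rule bij_betw_imp_surj_on)
  have cardL: "card L = card (natG :: ('a \<times> 'a \<Rightarrow> 'a \<times> 'a) set)"
  proof -
    have "card L = card (carrier (SL2::'a mat monoid))" using bij\<psi> by (simp add: bij_betw_same_card)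
    also have "\<dots> = card (natG :: ('a \<times> 'a \<Rightarrow> 'a \<times> 'a) set)" unfolding natG_def
      by (rule sym, rule card_image) (auto intro: inj_onI nat_map_inj)
    finally show ?thesis .
  qed
  show ?thesis
  proof (cases "card (UNIV :: 'a set) = 3")
    case True
    then show ?thesis using core3[OF rep True two] img by simp
  next
    case False
    obtain a :: 'a where good: "a \<noteq> 0" "a + 1 \<noteq> 0" "a * a + a + 1 \<noteq> 0"
      using good_exists(1)[OF ch p q m False two] by blast
    obtain a0 :: 'a where a0: "a0 \<noteq> 0" "a0 * a0 \<noteq> 1"
      using good_exists(2)[OF ch p q m False two] by blast
    obtain h where h: "h \<in> carrier SL2" and S: "S = (\<lambda>b. nat_map (h \<cdot> xm b \<cdot> minv h)) ` UNIV"
      using sylow_part[OF p m q syl] by blast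
    define \<psi>' where "\<psi>' = (\<lambda>A. nat_map (minv h) \<circ> \<psi> A \<circ> nat_map h)"
    have rep': "isrep \<psi>'" unfolding \<psi>'_def by (rule glv_conj_rep[OF rep h])
    have Bor: "\<forall>a b. a \<noteq> 0 \<longrightarrow> nat_map (a, b, 0, inverse a) \<in> \<psi>' ` carrier SL2"
    proof (intro allI impI)
      fix a b :: 'a assume a: "a \<noteq> 0"
      have "nat_map (h \<cdot> (a, b, 0, inverse a) \<cdot> minv h) \<in> normalizer_in natG S"
        by (rule norm_part[OF h S a])
      then have "nat_map (h \<cdot> (a, b, 0, inverse a) \<cdot> minv h) \<in> L" by (rule psubsetD[OF assms(8)])
      then have "nat_map (h \<cdot> (a, b, 0, inverse a) \<cdot> minv h) \<in> \<psi> ` carrier SL2" by (simp only: img)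
      then obtain A where A1: "A \<in> carrier SL2" and A2: "nat_map (h \<cdot> (a, b, 0, inverse a) \<cdot> minv h) = \<psi> A"
        by (rule imageE) blast
      have A: "A \<in> carrier SL2" "\<psi> A = nat_map (h \<cdot> (a, b, 0, inverse a) \<cdot> minv h)" using A1 A2 by simp_all
      have "\<psi>' A = nat_map (minv h \<cdot> (h \<cdot> (a, b, 0, inverse a) \<cdot> minv h) \<cdot> h)"
        unfolding \<psi>'_def A(2) by (simp only: nat_map_mult)
      also have "\<dots> = nat_map (a, b, 0, inverse a)" by (simp only: mult_conj_cancel[OF h])
      finally have e: "nat_map (a, b, 0, inverse a) = \<psi>' A" by (rule sym)
      show "nat_map (a, b, 0, inverse a) \<in> \<psi>' ` carrier SL2" by (rule image_eqI[where f="\<psi>'", OF e A(1)])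
    qed
    have img': "\<psi>' ` carrier SL2 = natG" by (rule core_gt3[OF rep' Bor p q m good a0])
    have "L \<subseteq> natG"
    proof
      fix f assume "f \<in> L"
      then obtain A where A: "A \<in> carrier SL2" "f = \<psi> A" using img by blast
      have "\<psi>' A \<in> natG" using img' A(1) by blast
      then obtain M where M: "M \<in> carrier SL2" "\<psi>' A = nat_map M" unfolding natG_def by blast
      have "f = nat_map (h \<cdot> M \<cdot> minv h)"
      proof (rule ext)
        fix v
        have "nat_map (minv h) (\<psi> A (nat_map h w)) = nat_map M w" for w
          using fun_cong[OF M(2), of w] unfolding \<psi>'_def by simp
        from this[of "nat_map (minv h) v"]
        have "nat_map (minv h) (\<psi> A v) = nat_map M (nat_map (minv h) v)"
          by (simp only: nat_map_minv_r[OF h])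
        then have "nat_map h (nat_map (minv h) (\<psi> A v)) = nat_map h (nat_map M (nat_map (minv h) v))" by simp
        then show "f v = nat_map (h \<cdot> M \<cdot> minv h) v"
          using A(2) by (simp only: nat_map_minv_r[OF h] nat_map_mult comp_apply)
      qed
      then show "f \<in> natG" unfolding natG_def using conj_closed[OF h M(1)] by blast
    qed
    then show ?thesis using cardL by (intro card_subset_eq) simp_all
  qed
qed


end
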